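(* Let $d\ge2$ and let $W=(W(x))_{x\in\mathbf{R}^d}$ be a centered Gaussian field which is almost surely continuous with $W(0)=0$ almost surely, and let $K(x,y)=E[W(x)W(y)]$. Let $S^{d-1}$ be the unit sphere with surface measure $dy$. If there exists $\varepsilon>0$ such that \[\inf_{x\in S^{d-1}}\int_{S^{d-1}}K(x,y)\,dy\ge\varepsilon,\] then for every $a\in\mathbf{R}$, \[P\Big(\inf_{x\in S^{d-1}}W(x)\ge a\Big)>0.\] *)

theory Defs
  imports "HOL-Probability.Probability"
begin

definition centered_gaussian :: "real \<Rightarrow> real measure" where
  "centered_gaussian \<sigma> =
     (if \<sigma> = 0 then return borel 0 else density lborel (normal_density 0 \<sigma>))"

definition centered_gaussian_field :: "'w measure \<Rightarrow> ('t \<Rightarrow> 'w \<Rightarrow> real) \<Rightarrow> bool" where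
  "centered_gaussian_field M W \<longleftrightarrow>
     prob_space M \<and>
     (\<forall>x. W x \<in> borel_measurable M) \<and>
     (\<forall>(I::nat set) (p::nat \<Rightarrow> 't) (c::nat \<Rightarrow> real). finite I \<longrightarrow>
        (\<exists>\<sigma>\<ge>0. distr M borel (\<lambda>\<omega>. \<Sum>i\<in>I. c i * W (p i) \<omega>) = centered_gaussian \<sigma>))"

text \<open>Surface measure on the unit sphere of R^n: sigma(A) = n * Lebesgue measure of the cone
  {t y | 0 < t <= 1, y in A}, realised as n times the push-forward of Lebesgue measure on
  the punctured unit ball under x |-> x / |x|.\<close>
definition sphere_surface_measure :: "(real^'n) measure" where
  "sphere_surface_measure =
     scale_measure (of_nat CARD('n))
       (distr (restrict_space lborel (cball 0 1 - {0})) (restrict_space borel (sphere 0 1))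
          (\<lambda>x. x /\<^sub>R norm x))"

end

theory Submission
  imports Defs
begin

lemma weighted_unique:
  fixes X :: "'a \<Rightarrow> real" and X' :: "'b \<Rightarrow> real"
  assumes M: "prob_space M" and N: "prob_space N"
    and X[measurable]: "X \<in> borel_measurable M" and X'[measurable]: "X' \<in> borel_measurable N"
    and w[measurable]: "w \<in> borel_measurable M" and w'[measurable]: "w' \<in> borel_measurable N"
    and wb: "\<And>\<omega>. \<omega> \<in> space M \<Longrightarrow> 0 \<le> w \<omega> \<and> w \<omega> \<le> K"
    and wb': "\<And>\<omega>. \<omega> \<in> space N \<Longrightarrow> 0 \<le> w' \<omega> \<and> w' \<omega> \<le> K"
    and ch: "\<And>t. (\<integral>\<omega>. w \<omega> *\<^sub>R iexp (t * X \<omega>) \<partial>M) = (\<integral>\<omega>. w' \<omega> *\<^sub>R iexp (t * X' \<omega>) \<partial>N)"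
    and B[measurable]: "B \<in> sets borel"
  shows "(\<integral>\<omega>. w \<omega> * indicator B (X \<omega>) \<partial>M) = (\<integral>\<omega>. w' \<omega> * indicator B (X' \<omega>) \<partial>N)"
proof -
  interpret M: prob_space M by fact
  interpret N: prob_space N by fact
  have K0: "0 \<le> K" using M.not_empty wb by fastforce
  have intw: "integrable M w"
    using wb by (intro M.integrable_const_bound[where B=K]) auto
  have intw': "integrable N w'"
    using wb' by (intro N.integrable_const_bound[where B=K]) auto
  have intwi: "integrable M (\<lambda>\<omega>. w \<omega> * indicator B (X \<omega>))"
    using wb K0 by (intro M.integrable_const_bound[where B=K]) (auto simp: indicator_def)
  have intwi': "integrable N (\<lambda>\<omega>. w' \<omega> * indicator B (X' \<omega>))"
    using wb' K0 by (intro N.integrable_const_bound[where B=K]) (auto simp: indicator_def)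
  have ceq: "(\<integral>\<omega>. w \<omega> \<partial>M) = (\<integral>\<omega>. w' \<omega> \<partial>N)"
    using ch[of 0] intw intw' by simp
  define c where "c = (\<integral>\<omega>. w \<omega> \<partial>M)"
  have c0: "c \<ge> 0" unfolding c_def using wb by (intro integral_nonneg_AE) auto
  show ?thesis
  proof (cases "c = 0")
    case True
    have "AE \<omega> in M. w \<omega> = 0"
      using True wb intw unfolding c_def by (subst (asm) integral_nonneg_eq_0_iff_AE) auto
    then have 1: "(\<integral>\<omega>. w \<omega> * indicator B (X \<omega>) \<partial>M) = 0"
      by (subst integral_cong_AE[where g="\<lambda>_. 0"]) auto
    have "(\<integral>\<omega>. w' \<omega> \<partial>N) = 0" using True ceq c_def by simp
    then have "AE \<omega> in N. w' \<omega> = 0"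
      using wb' intw' by (subst (asm) integral_nonneg_eq_0_iff_AE) auto
    then have 2: "(\<integral>\<omega>. w' \<omega> * indicator B (X' \<omega>) \<partial>N) = 0"
      by (subst integral_cong_AE[where g="\<lambda>_. 0"]) auto
    show ?thesis using 1 2 by simp
  next
    case False
    then have cp: "c > 0" using c0 by simp
    have c': "c = (\<integral>\<omega>. w' \<omega> \<partial>N)" using ceq c_def by simp
    define DM where "DM = density M (\<lambda>\<omega>. w \<omega> / c)"
    define DN where "DN = density N (\<lambda>\<omega>. w' \<omega> / c)"
    have pDM: "prob_space DM"
    proof
      have "emeasure DM (space DM) = (\<integral>\<^sup>+\<omega>. ennreal (w \<omega> / c) \<partial>M)"
        unfolding DM_def by (simp add: emeasure_density nn_integral_density)
      also have "\<dots> = ennreal (\<integral>\<omega>. w \<omega> / c \<partial>M)"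
        using intw wb cp by (intro nn_integral_eq_integral) auto
      also have "\<dots> = 1" using cp unfolding c_def by simp
      finally show "emeasure DM (space DM) = 1" .
    qed
    have pDN: "prob_space DN"
    proof
      have "emeasure DN (space DN) = (\<integral>\<^sup>+\<omega>. ennreal (w' \<omega> / c) \<partial>N)"
        unfolding DN_def by (simp add: emeasure_density nn_integral_density)
      also have "\<dots> = ennreal (\<integral>\<omega>. w' \<omega> / c \<partial>N)"
        using intw' wb' cp by (intro nn_integral_eq_integral) auto
      also have "\<dots> = 1" using cp c' by simp
      finally show "emeasure DN (space DN) = 1" .
    qed
    have rd1: "real_distribution (distr DM borel X)"
      unfolding real_distribution_def real_distribution_axioms_def
      using pDM by (auto intro!: prob_space.prob_space_distr simp: DM_def)
    have rd2: "real_distribution (distr DN borel X')"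
      unfolding real_distribution_def real_distribution_axioms_def
      using pDN by (auto intro!: prob_space.prob_space_distr simp: DN_def)
    have chM: "char (distr DM borel X) t = (\<integral>\<omega>. w \<omega> *\<^sub>R iexp (t * X \<omega>) \<partial>M) / c" for t
    proof -
      have "char (distr DM borel X) t = (\<integral>\<omega>. iexp (t * X \<omega>) \<partial>DM)"
        unfolding char_def DM_def by (subst integral_distr) auto
      also have "\<dots> = (\<integral>\<omega>. (w \<omega> / c) *\<^sub>R iexp (t * X \<omega>) \<partial>M)"
        unfolding DM_def using wb c0 by (subst integral_density) auto
      also have "\<dots> = (\<integral>\<omega>. (1/c) *\<^sub>R (w \<omega> *\<^sub>R iexp (t * X \<omega>)) \<partial>M)"
        by (simp add: divide_inverse mult.commute)
      also have "\<dots> = (\<integral>\<omega>. w \<omega> *\<^sub>R iexp (t * X \<omega>) \<partial>M) / c"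
        by (simp add: scaleR_conv_of_real divide_inverse mult.commute)
      finally show ?thesis .
    qed
    have chN: "char (distr DN borel X') t = (\<integral>\<omega>. w' \<omega> *\<^sub>R iexp (t * X' \<omega>) \<partial>N) / c" for t
    proof -
      have "char (distr DN borel X') t = (\<integral>\<omega>. iexp (t * X' \<omega>) \<partial>DN)"
        unfolding char_def DN_def by (subst integral_distr) auto
      also have "\<dots> = (\<integral>\<omega>. (w' \<omega> / c) *\<^sub>R iexp (t * X' \<omega>) \<partial>N)"
        unfolding DN_def using wb' c0 by (subst integral_density) auto
      also have "\<dots> = (\<integral>\<omega>. (1/c) *\<^sub>R (w' \<omega> *\<^sub>R iexp (t * X' \<omega>)) \<partial>N)"
        by (simp add: divide_inverse mult.commute)
      also have "\<dots> = (\<integral>\<omega>. w' \<omega> *\<^sub>R iexp (t * X' \<omega>) \<partial>N) / c"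
        by (simp add: scaleR_conv_of_real divide_inverse mult.commute)
      finally show ?thesis .
    qed
    have eqd: "distr DM borel X = distr DN borel X'"
    proof (rule Levy_uniqueness[OF rd1 rd2], rule ext)
      fix t show "char (distr DM borel X) t = char (distr DN borel X') t"
        unfolding chM chN ch[of t] ..
    qed
    have mM: "(\<integral>x. indicator B x \<partial>distr DM borel X) = (\<integral>\<omega>. w \<omega> * indicator B (X \<omega>) \<partial>M) / c"
    proof -
      have "(\<integral>x. (indicator B x :: real) \<partial>distr DM borel X) = (\<integral>\<omega>. indicator B (X \<omega>) \<partial>DM)"
        unfolding DM_def by (rule integral_distr) auto
      also have "\<dots> = (\<integral>\<omega>. (w \<omega> / c) *\<^sub>R indicator B (X \<omega>) \<partial>M)"
        unfolding DM_def using wb c0 by (subst integral_density) auto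
      also have "\<dots> = (\<integral>\<omega>. w \<omega> * indicator B (X \<omega>) \<partial>M) / c"
        by simp
      finally show ?thesis .
    qed
    have mN: "(\<integral>x. indicator B x \<partial>distr DN borel X') = (\<integral>\<omega>. w' \<omega> * indicator B (X' \<omega>) \<partial>N) / c"
    proof -
      have "(\<integral>x. (indicator B x :: real) \<partial>distr DN borel X') = (\<integral>\<omega>. indicator B (X' \<omega>) \<partial>DN)"
        unfolding DN_def by (rule integral_distr) auto
      also have "\<dots> = (\<integral>\<omega>. (w' \<omega> / c) *\<^sub>R indicator B (X' \<omega>) \<partial>N)"
        unfolding DN_def using wb' c0 by (subst integral_density) auto
      also have "\<dots> = (\<integral>\<omega>. w' \<omega> * indicator B (X' \<omega>) \<partial>N) / c"
        by simp
      finally show ?thesis .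
    qed
    show ?thesis using mM mN eqd cp by (metis divide_cancel_right less_irrefl)
  qed
qed

lemma iexp_cis: "iexp y = cis y"
  by (simp add: cis_conv_exp)
lemma iexp_cos: "complex_of_real (cos x) = (iexp x + iexp (- x)) / 2"
  unfolding iexp_cis by (simp add: complex_eq_iff)
lemma iexp_sin: "complex_of_real (sin x) = (iexp x - iexp (- x)) / (2 * \<i>)"
  unfolding iexp_cis by (simp add: complex_eq_iff)
lemma iexp_add': "iexp (a + b) = iexp a * iexp b"
  by (simp add: distrib_left exp_add)

lemma bounded_integrable:
  fixes f :: "'a \<Rightarrow> 'b::{banach, second_countable_topology}"
  assumes "prob_space M" "f \<in> borel_measurable M" "\<And>\<omega>. \<omega> \<in> space M \<Longrightarrow> norm (f \<omega>) \<le> K"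
  shows "integrable M f"
proof -
  interpret prob_space M by fact
  show ?thesis using assms(2,3) by (intro integrable_const_bound[where B=K]) auto
qed

lemma cos_weight_split:
  fixes g p Y :: "'a \<Rightarrow> real"
  assumes M: "prob_space M" and [measurable]: "g \<in> borel_measurable M" "p \<in> borel_measurable M" "Y \<in> borel_measurable M"
    and gb: "\<And>\<omega>. \<bar>g \<omega>\<bar> \<le> 1"
  shows "(\<integral>\<omega>. (g \<omega> * (1 + cos (p \<omega>))) *\<^sub>R iexp (t * Y \<omega>) \<partial>M) =
     (\<integral>\<omega>. g \<omega> *\<^sub>R iexp (t * Y \<omega> + 0 * p \<omega>) \<partial>M) + (1/2) * (\<integral>\<omega>. g \<omega> *\<^sub>R iexp (t * Y \<omega> + 1 * p \<omega>) \<partial>M)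
     + (1/2) * (\<integral>\<omega>. g \<omega> *\<^sub>R iexp (t * Y \<omega> + (-1) * p \<omega>) \<partial>M)"
proof -
  have int: "integrable M (\<lambda>\<omega>. g \<omega> *\<^sub>R iexp (t * Y \<omega> + c * p \<omega>))" for c
    using gb by (intro bounded_integrable[OF M, where K=1]) (auto simp: norm_mult)
  have pw: "(g \<omega> * (1 + cos (p \<omega>))) *\<^sub>R iexp (t * Y \<omega>) =
        g \<omega> *\<^sub>R iexp (t * Y \<omega> + 0 * p \<omega>) + ((1/2) * (g \<omega> *\<^sub>R iexp (t * Y \<omega> + 1 * p \<omega>))
        + (1/2) * (g \<omega> *\<^sub>R iexp (t * Y \<omega> + (-1) * p \<omega>)))" for \<omega>
    unfolding iexp_cis by (simp add: complex_eq_iff cos_add sin_add cos_diff sin_diff field_simps)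
  show ?thesis
    unfolding pw
    apply (subst Bochner_Integration.integral_add)
      apply (rule int)
     apply (intro Bochner_Integration.integrable_add Bochner_Integration.integrable_mult_right int)
    apply (subst Bochner_Integration.integral_add)
      apply (intro Bochner_Integration.integrable_mult_right int)+
    apply (simp only: integral_mult_right_zero)
    apply algebra
    done
qed

lemma sin_weight_split:
  fixes g p Y :: "'a \<Rightarrow> real"
  assumes M: "prob_space M" and [measurable]: "g \<in> borel_measurable M" "p \<in> borel_measurable M" "Y \<in> borel_measurable M"
    and gb: "\<And>\<omega>. \<bar>g \<omega>\<bar> \<le> 1"
  shows "(\<integral>\<omega>. (g \<omega> * (1 + sin (p \<omega>))) *\<^sub>R iexp (t * Y \<omega>) \<partial>M) =
     (\<integral>\<omega>. g \<omega> *\<^sub>R iexp (t * Y \<omega> + 0 * p \<omega>) \<partial>M) - (\<i>/2) * (\<integral>\<omega>. g \<omega> *\<^sub>R iexp (t * Y \<omega> + 1 * p \<omega>) \<partial>M)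
     + (\<i>/2) * (\<integral>\<omega>. g \<omega> *\<^sub>R iexp (t * Y \<omega> + (-1) * p \<omega>) \<partial>M)"
proof -
  have int: "integrable M (\<lambda>\<omega>. g \<omega> *\<^sub>R iexp (t * Y \<omega> + c * p \<omega>))" for c
    using gb by (intro bounded_integrable[OF M, where K=1]) (auto simp: norm_mult)
  have pw: "(g \<omega> * (1 + sin (p \<omega>))) *\<^sub>R iexp (t * Y \<omega>) =
        g \<omega> *\<^sub>R iexp (t * Y \<omega> + 0 * p \<omega>) + ((\<i>/2) * (g \<omega> *\<^sub>R iexp (t * Y \<omega> + (-1) * p \<omega>))
        - (\<i>/2) * (g \<omega> *\<^sub>R iexp (t * Y \<omega> + 1 * p \<omega>)))" for \<omega>
    unfolding iexp_cis by (simp add: complex_eq_iff cos_add sin_add cos_diff sin_diff field_simps)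
  show ?thesis
    unfolding pw
    apply (subst Bochner_Integration.integral_add)
      apply (rule int)
     apply (intro Bochner_Integration.integrable_diff Bochner_Integration.integrable_mult_right int)
    apply (subst Bochner_Integration.integral_diff)
      apply (intro Bochner_Integration.integrable_mult_right int)+
    apply (simp only: integral_mult_right_zero)
    apply algebra
    done
qed

lemma decomp_integral:
  fixes g p Y :: "'a \<Rightarrow> real"
  assumes M: "prob_space M" and [measurable]: "g \<in> borel_measurable M" "p \<in> borel_measurable M" "Y \<in> borel_measurable M"
    and B[measurable]: "B \<in> sets borel"
    and gb: "\<And>\<omega>. 0 \<le> g \<omega> \<and> g \<omega> \<le> 1"
  shows "(\<integral>\<omega>. (g \<omega> * indicator B (Y \<omega>)) *\<^sub>R iexp (p \<omega>) \<partial>M) =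
    complex_of_real ((\<integral>\<omega>. (g \<omega> * (1 + cos (p \<omega>))) * indicator B (Y \<omega>) \<partial>M) - (\<integral>\<omega>. g \<omega> * indicator B (Y \<omega>) \<partial>M))
    + \<i> * complex_of_real ((\<integral>\<omega>. (g \<omega> * (1 + sin (p \<omega>))) * indicator B (Y \<omega>) \<partial>M) - (\<integral>\<omega>. g \<omega> * indicator B (Y \<omega>) \<partial>M))"
proof -
  have bnd: "\<bar>(g \<omega> * (1 + c)) * indicator B y\<bar> \<le> 2" "\<bar>g \<omega> * indicator B y\<bar> \<le> 1"
    if "-1 \<le> c" "c \<le> 1" for \<omega> c y
  proof -
    have a: "0 \<le> g \<omega> * (1 + c)" using that gb[of \<omega>] by simp
    have b: "g \<omega> * (1 + c) \<le> 1 * 2" using that gb[of \<omega>] by (intro mult_mono) auto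
    show "\<bar>(g \<omega> * (1 + c)) * indicator B y\<bar> \<le> 2" using a b by (simp add: indicator_def)
    show "\<bar>g \<omega> * indicator B y\<bar> \<le> 1" using gb[of \<omega>] by (simp add: indicator_def)
  qed
  have i0: "integrable M (\<lambda>\<omega>. g \<omega> * indicator B (Y \<omega>))"
    using bnd(2)[of 0] by (intro bounded_integrable[OF M, where K=1]) auto
  have i1: "integrable M (\<lambda>\<omega>. (g \<omega> * (1 + cos (p \<omega>))) * indicator B (Y \<omega>))"
    using bnd(1) by (intro bounded_integrable[OF M, where K=2]) auto
  have i2: "integrable M (\<lambda>\<omega>. (g \<omega> * (1 + sin (p \<omega>))) * indicator B (Y \<omega>))"
    using bnd(1) by (intro bounded_integrable[OF M, where K=2]) auto
  have pw: "(g \<omega> * indicator B (Y \<omega>)) *\<^sub>R iexp (p \<omega>) =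
     complex_of_real ((g \<omega> * (1 + cos (p \<omega>))) * indicator B (Y \<omega>) - g \<omega> * indicator B (Y \<omega>))
     + \<i> * complex_of_real ((g \<omega> * (1 + sin (p \<omega>))) * indicator B (Y \<omega>) - g \<omega> * indicator B (Y \<omega>))" for \<omega>
    unfolding iexp_cis by (simp add: complex_eq_iff algebra_simps)
  show ?thesis
    unfolding pw
    apply (subst Bochner_Integration.integral_add)
      apply (intro integrable_of_real Bochner_Integration.integrable_diff i0 i1)
     apply (intro Bochner_Integration.integrable_mult_right integrable_of_real Bochner_Integration.integrable_diff i0 i2)
    apply (simp only: integral_mult_right_zero integral_complex_of_real)
    apply (subst (1 2) Bochner_Integration.integral_diff)
        apply (rule i1 i0 i2)+
    apply (rule refl)
    done
qed

lemma weight_bound: "0 \<le> a \<Longrightarrow> a \<le> 1 \<Longrightarrow> -1 \<le> c \<Longrightarrow> c \<le> 1 \<Longrightarrow> 0 \<le> a*(1+c) \<and> a*(1+c) \<le> (2::real)"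
  using mult_mono[of a 1 "1+c" 2] by auto

lemma joint_unique_aux:
  fixes X :: "nat \<Rightarrow> 'a \<Rightarrow> real" and X' :: "nat \<Rightarrow> 'b \<Rightarrow> real"
  assumes M: "prob_space M" and N: "prob_space N"
    and X[measurable]: "\<And>j. X j \<in> borel_measurable M" and X'[measurable]: "\<And>j. X' j \<in> borel_measurable N"
    and ch: "\<And>\<theta>. (\<integral>\<omega>. iexp (\<Sum>j<n. \<theta> j * X j \<omega>) \<partial>M) = (\<integral>\<omega>. iexp (\<Sum>j<n. \<theta> j * X' j \<omega>) \<partial>N)"
  shows "m \<le> n \<Longrightarrow> (\<forall>j<m. B j \<in> sets borel) \<Longrightarrow>
     (\<integral>\<omega>. (\<Prod>j<m. indicator (B j) (X j \<omega>) :: real) *\<^sub>R iexp (\<Sum>j\<in>{m..<n}. \<theta> j * X j \<omega>) \<partial>M) =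
     (\<integral>\<omega>. (\<Prod>j<m. indicator (B j) (X' j \<omega>) :: real) *\<^sub>R iexp (\<Sum>j\<in>{m..<n}. \<theta> j * X' j \<omega>) \<partial>N)"
proof (induction m arbitrary: B \<theta>)
  case 0
  then show ?case using ch[of \<theta>] by (simp add: atLeast0LessThan)
next
  case (Suc m)
  have mn: "m < n" using Suc.prems by simp
  have Bm[measurable]: "B m \<in> sets borel" using Suc.prems by simp
  have Bj[measurable]: "\<And>j. j < m \<Longrightarrow> B j \<in> sets borel" using Suc.prems by simp
  define g where "g = (\<lambda>\<omega>. (\<Prod>j<m. indicator (B j) (X j \<omega>) :: real))"
  define g' where "g' = (\<lambda>\<omega>. (\<Prod>j<m. indicator (B j) (X' j \<omega>) :: real))"
  define \<phi> where "\<phi> = (\<lambda>\<omega>. \<Sum>j\<in>{Suc m..<n}. \<theta> j * X j \<omega>)"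
  define \<phi>' where "\<phi>' = (\<lambda>\<omega>. \<Sum>j\<in>{Suc m..<n}. \<theta> j * X' j \<omega>)"
  have gm[measurable]: "g \<in> borel_measurable M" unfolding g_def
    by (intro borel_measurable_prod) (auto intro!: borel_measurable_indicator' Bj)
  have gm'[measurable]: "g' \<in> borel_measurable N" unfolding g'_def
    by (intro borel_measurable_prod) (auto intro!: borel_measurable_indicator' Bj)
  have phim[measurable]: "\<phi> \<in> borel_measurable M" unfolding \<phi>_def by measurable
  have phim'[measurable]: "\<phi>' \<in> borel_measurable N" unfolding \<phi>'_def by measurable
  have g01: "0 \<le> g \<omega> \<and> g \<omega> \<le> 1" for \<omega> unfolding g_def
    by (auto intro!: prod_nonneg prod_le_1 simp: indicator_def)
  have g01': "0 \<le> g' \<omega> \<and> g' \<omega> \<le> 1" for \<omega> unfolding g'_def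
    by (auto intro!: prod_nonneg prod_le_1 simp: indicator_def)
  have ga: "\<bar>g \<omega>\<bar> \<le> 1" for \<omega> using g01 by auto
  have ga': "\<bar>g' \<omega>\<bar> \<le> 1" for \<omega> using g01' by auto
  have IH: "(\<integral>\<omega>. g \<omega> *\<^sub>R iexp (t * X m \<omega> + s * \<phi> \<omega>) \<partial>M) =
            (\<integral>\<omega>. g' \<omega> *\<^sub>R iexp (t * X' m \<omega> + s * \<phi>' \<omega>) \<partial>N)" for t s
  proof -
    define \<theta>' where "\<theta>' = (\<lambda>j. if j = m then t else s * \<theta> j)"
    have split: "{m..<n} = insert m {Suc m..<n}" using mn by auto
    have e1: "(\<Sum>j\<in>{m..<n}. \<theta>' j * Y j \<omega>) = t * Y m \<omega> + s * (\<Sum>j\<in>{Suc m..<n}. \<theta> j * Y j \<omega>)"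
      for Y :: "nat \<Rightarrow> 'c \<Rightarrow> real" and \<omega>
      unfolding split by (simp add: \<theta>'_def sum_distrib_left mult.assoc)
    show ?thesis
      using Suc.IH[of B \<theta>'] Suc.prems unfolding g_def g'_def \<phi>_def \<phi>'_def e1 by simp
  qed
  have W1: "(\<integral>\<omega>. g \<omega> * indicator (B m) (X m \<omega>) \<partial>M) = (\<integral>\<omega>. g' \<omega> * indicator (B m) (X' m \<omega>) \<partial>N)"
    by (rule weighted_unique[OF M N X X' gm gm' _ _ _ Bm, where K=1])
       (use g01 g01' IH[of _ 0] in auto)
  have W2: "(\<integral>\<omega>. (g \<omega> * (1 + cos (\<phi> \<omega>))) * indicator (B m) (X m \<omega>) \<partial>M) =
            (\<integral>\<omega>. (g' \<omega> * (1 + cos (\<phi>' \<omega>))) * indicator (B m) (X' m \<omega>) \<partial>N)"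
  proof (rule weighted_unique[OF M N X X' _ _ _ _ _ Bm, where K=2])
    show "0 \<le> g \<omega> * (1 + cos (\<phi> \<omega>)) \<and> g \<omega> * (1 + cos (\<phi> \<omega>)) \<le> 2" for \<omega>
      using g01[of \<omega>] cos_ge_minus_one[of "\<phi> \<omega>"] cos_le_one[of "\<phi> \<omega>"]
      by (meson weight_bound)
    show "0 \<le> g' \<omega> * (1 + cos (\<phi>' \<omega>)) \<and> g' \<omega> * (1 + cos (\<phi>' \<omega>)) \<le> 2" for \<omega>
      using g01'[of \<omega>] cos_ge_minus_one[of "\<phi>' \<omega>"] cos_le_one[of "\<phi>' \<omega>"]
      by (meson weight_bound)
    fix t
    show "(\<integral>\<omega>. (g \<omega> * (1 + cos (\<phi> \<omega>))) *\<^sub>R iexp (t * X m \<omega>) \<partial>M) =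
          (\<integral>\<omega>. (g' \<omega> * (1 + cos (\<phi>' \<omega>))) *\<^sub>R iexp (t * X' m \<omega>) \<partial>N)"
      unfolding cos_weight_split[OF M gm phim X ga] cos_weight_split[OF N gm' phim' X' ga'] IH ..
  qed measurable
  have W3: "(\<integral>\<omega>. (g \<omega> * (1 + sin (\<phi> \<omega>))) * indicator (B m) (X m \<omega>) \<partial>M) =
            (\<integral>\<omega>. (g' \<omega> * (1 + sin (\<phi>' \<omega>))) * indicator (B m) (X' m \<omega>) \<partial>N)"
  proof (rule weighted_unique[OF M N X X' _ _ _ _ _ Bm, where K=2])
    show "0 \<le> g \<omega> * (1 + sin (\<phi> \<omega>)) \<and> g \<omega> * (1 + sin (\<phi> \<omega>)) \<le> 2" for \<omega>
      using g01[of \<omega>] sin_ge_minus_one[of "\<phi> \<omega>"] sin_le_one[of "\<phi> \<omega>"]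
      by (meson weight_bound)
    show "0 \<le> g' \<omega> * (1 + sin (\<phi>' \<omega>)) \<and> g' \<omega> * (1 + sin (\<phi>' \<omega>)) \<le> 2" for \<omega>
      using g01'[of \<omega>] sin_ge_minus_one[of "\<phi>' \<omega>"] sin_le_one[of "\<phi>' \<omega>"]
      by (meson weight_bound)
    fix t
    show "(\<integral>\<omega>. (g \<omega> * (1 + sin (\<phi> \<omega>))) *\<^sub>R iexp (t * X m \<omega>) \<partial>M) =
          (\<integral>\<omega>. (g' \<omega> * (1 + sin (\<phi>' \<omega>))) *\<^sub>R iexp (t * X' m \<omega>) \<partial>N)"
      unfolding sin_weight_split[OF M gm phim X ga] sin_weight_split[OF N gm' phim' X' ga'] IH ..
  qed measurable
  have main: "(\<integral>\<omega>. (g \<omega> * indicator (B m) (X m \<omega>)) *\<^sub>R iexp (\<phi> \<omega>) \<partial>M) =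
        (\<integral>\<omega>. (g' \<omega> * indicator (B m) (X' m \<omega>)) *\<^sub>R iexp (\<phi>' \<omega>) \<partial>N)"
    unfolding decomp_integral[OF M gm phim X Bm g01] decomp_integral[OF N gm' phim' X' Bm g01'] W1 W2 W3 ..
  show ?case using main unfolding g_def g'_def \<phi>_def \<phi>'_def
    by (simp only: prod.lessThan_Suc)
qed

lemma joint_unique:
  fixes X :: "nat \<Rightarrow> 'a \<Rightarrow> real" and X' :: "nat \<Rightarrow> 'b \<Rightarrow> real"
  assumes M: "prob_space M" and N: "prob_space N"
    and X[measurable]: "\<And>j. X j \<in> borel_measurable M" and X'[measurable]: "\<And>j. X' j \<in> borel_measurable N"
    and ch: "\<And>\<theta>. (\<integral>\<omega>. iexp (\<Sum>j<n. \<theta> j * X j \<omega>) \<partial>M) = (\<integral>\<omega>. iexp (\<Sum>j<n. \<theta> j * X' j \<omega>) \<partial>N)"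
    and B: "\<And>j. j < n \<Longrightarrow> B j \<in> sets borel"
  shows "measure M {\<omega>\<in>space M. \<forall>j<n. X j \<omega> \<in> B j} = measure N {\<omega>\<in>space N. \<forall>j<n. X' j \<omega> \<in> B j}"
proof -
  have e: "(\<Prod>j<n. indicator (B j) (Y j \<omega>) :: real) = indicator {\<omega>. \<forall>j<n. Y j \<omega> \<in> B j} \<omega>"
    for Y :: "nat \<Rightarrow> 'c \<Rightarrow> real" and \<omega>
    by (induction n) (auto simp: indicator_def less_Suc_eq)
  have "(\<integral>\<omega>. (\<Prod>j<n. indicator (B j) (X j \<omega>) :: real) *\<^sub>R iexp (\<Sum>j\<in>{n..<n}. 0 * X j \<omega>) \<partial>M) =
     (\<integral>\<omega>. (\<Prod>j<n. indicator (B j) (X' j \<omega>) :: real) *\<^sub>R iexp (\<Sum>j\<in>{n..<n}. 0 * X' j \<omega>) \<partial>N)"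
    by (rule joint_unique_aux[OF M N X X' ch]) (use B in auto)
  then have "(\<integral>\<omega>. (indicator {\<omega>. \<forall>j<n. X j \<omega> \<in> B j} \<omega> :: real) \<partial>M) = (\<integral>\<omega>. indicator {\<omega>. \<forall>j<n. X' j \<omega> \<in> B j} \<omega> \<partial>N)"
    unfolding e scaleR_conv_of_real by simp
  then show ?thesis by (simp add: Int_def conj_commute)
qed

lemma cg_char:
  assumes M: "prob_space M" and Z[measurable]: "Z \<in> borel_measurable M" and s: "\<sigma> \<ge> 0"
    and D: "distr M borel Z = centered_gaussian \<sigma>"
  shows "(\<integral>\<omega>. iexp (t * Z \<omega>) \<partial>M) = complex_of_real (exp (- (\<sigma>^2 * t^2) / 2))"
proof -
  have "(\<integral>\<omega>. iexp (t * Z \<omega>) \<partial>M) = (\<integral>x. iexp (t * x) \<partial>distr M borel Z)"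
    by (subst integral_distr) auto
  also have "\<dots> = complex_of_real (exp (- (\<sigma>^2 * t^2) / 2))"
  proof (cases "\<sigma> = 0")
    case True
    then show ?thesis unfolding D centered_gaussian_def
      by (simp add: integral_return)
  next
    case False
    then have sp: "\<sigma> > 0" using s by simp
    define S where "S = std_normal_distribution"
    interpret S: prob_space S unfolding S_def using real_dist_normal_dist unfolding real_distribution_def by simp
    have d0: "distributed S lborel (\<lambda>x. x) std_normal_density"
      unfolding distributed_def S_def by (simp add: distr_id2)
    have d1: "distributed S lborel (\<lambda>x. 0 + \<sigma> * x) (normal_density (0 + \<sigma> * 0) (\<bar>\<sigma>\<bar> * 1))"
      by (rule S.normal_density_affine[OF d0]) (use sp in auto)
    then have d2: "distr S lborel (\<lambda>x. \<sigma> * x) = density lborel (normal_density 0 \<sigma>)"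
      using sp unfolding distributed_def by simp
    have "(\<integral>x. iexp (t * x) \<partial>distr M borel Z) = (\<integral>x. iexp (t * x) \<partial>distr S lborel (\<lambda>x. \<sigma> * x))"
      unfolding D centered_gaussian_def d2 using False by simp
    also have "\<dots> = (\<integral>x. iexp (t * (\<sigma> * x)) \<partial>S)"
      by (subst integral_distr) (auto simp: S_def)
    also have "\<dots> = char S (t * \<sigma>)" unfolding char_def by (simp add: mult.assoc)
    also have "\<dots> = complex_of_real (exp (- (\<sigma>^2 * t^2) / 2))"
      unfolding S_def char_std_normal_distribution by (simp add: power_mult_distrib mult.commute)
    finally show ?thesis .
  qed
  finally show ?thesis .
qed

lemma cg_moment2:
  assumes M: "prob_space M" and Z[measurable]: "Z \<in> borel_measurable M" and s: "\<sigma> \<ge> 0"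
    and D: "distr M borel Z = centered_gaussian \<sigma>"
  shows "integrable M (\<lambda>\<omega>. (Z \<omega>)^2)" "(\<integral>\<omega>. (Z \<omega>)^2 \<partial>M) = \<sigma>^2"
proof -
  have i: "integrable M (\<lambda>\<omega>. (Z \<omega>)^2) \<longleftrightarrow> integrable (distr M borel Z) (\<lambda>x. x^2)"
    by (subst integrable_distr_eq) auto
  have e: "(\<integral>\<omega>. (Z \<omega>)^2 \<partial>M) = (\<integral>x. x^2 \<partial>distr M borel Z)"
    by (subst integral_distr) auto
  have "integrable (distr M borel Z) (\<lambda>x. x^2) \<and> (\<integral>x. x^2 \<partial>distr M borel Z) = \<sigma>^2"
  proof (cases "\<sigma> = 0")
    case True
    have "integrable (return borel (0::real)) (\<lambda>x. x^2)"
      by (rule finite_measure.integrable_const_bound[where B=0]) (auto intro!: finite_measureI simp: AE_return)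
    then show ?thesis unfolding D centered_gaussian_def using True by (simp add: integral_return)
  next
    case False
    then have sp: "\<sigma> > 0" using s by simp
    have ii: "integrable lborel (\<lambda>x. normal_density 0 \<sigma> x * (x - 0)^2)"
      by (rule integrable_normal_moment[OF sp])
    have "integrable (density lborel (normal_density 0 \<sigma>)) (\<lambda>x. x^2)"
      using ii by (subst integrable_density) auto
    moreover have "(\<integral>x. x^2 \<partial>density lborel (normal_density 0 \<sigma>)) = \<sigma>^2"
      using integral_normal_moment_even[OF sp, of 0 1]
      by (subst integral_density) (auto simp: power2_eq_square)
    ultimately show ?thesis unfolding D centered_gaussian_def using False by simp
  qed
  then show "integrable M (\<lambda>\<omega>. (Z \<omega>)^2)" "(\<integral>\<omega>. (Z \<omega>)^2 \<partial>M) = \<sigma>^2" using i e by auto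
qed

lemma cg_pos:
  assumes M: "prob_space M" and Z[measurable]: "Z \<in> borel_measurable M" and s: "\<sigma> > 0"
    and D: "distr M borel Z = centered_gaussian \<sigma>"
  shows "measure M {\<omega>\<in>space M. t \<le> Z \<omega>} > 0"
proof -
  interpret prob_space M by fact
  have "emeasure M {\<omega>\<in>space M. t \<le> Z \<omega>} = emeasure (distr M borel Z) {t..}"
    by (subst emeasure_distr) (auto simp: vimage_def Int_def conj_commute)
  also have "\<dots> = (\<integral>\<^sup>+x. ennreal (normal_density 0 \<sigma> x) * indicator {t..} x \<partial>lborel)"
    unfolding D centered_gaussian_def using s by (simp add: emeasure_density)
  also have "\<dots> > 0"
  proof (rule ccontr)
    assume "\<not> ?thesis"
    then have "(\<integral>\<^sup>+x. ennreal (normal_density 0 \<sigma> x) * indicator {t..} x \<partial>lborel) = 0" by simp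
    then have AE: "AE x in lborel. ennreal (normal_density 0 \<sigma> x) * indicator {t..} x = 0"
      by (subst (asm) nn_integral_0_iff_AE) auto
    have pos: "normal_density 0 \<sigma> x \<noteq> 0" for x using normal_density_pos[OF s, of 0 x] by linarith
    from AE have ae: "AE x in lborel. x \<notin> {t..t+1}"
      by eventually_elim (auto simp: indicator_def pos)
    have "emeasure lborel {x \<in> space lborel. \<not> x \<notin> {t..t+1}} = 0"
      using ae by (subst (asm) AE_iff_measurable[OF _ refl]) auto
    moreover have "{x \<in> space lborel. \<not> x \<notin> {t..t+1}} = {t..t+1}" by auto
    ultimately show False by simp
  qed
  finally show ?thesis by (simp add: emeasure_eq_measure)
qed

definition lin_comb :: "('t \<Rightarrow> 'w \<Rightarrow> real) \<Rightarrow> ('w \<Rightarrow> real) set" where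
  "lin_comb W = {f. \<exists>(I::nat set) p c. finite I \<and> f = (\<lambda>\<omega>. \<Sum>i\<in>I. c i * W (p i) \<omega>)}"

lemma lc_W: "W x \<in> lin_comb W"
  unfolding lin_comb_def by (rule CollectI, rule exI[of _ "{0}"], rule exI[of _ "\<lambda>_. x"], rule exI[of _ "\<lambda>_. 1"]) simp

lemma lc_zero: "(\<lambda>_. 0) \<in> lin_comb W"
  unfolding lin_comb_def by (rule CollectI, rule exI[of _ "{}"]) simp

lemma lc_scale: "f \<in> lin_comb W \<Longrightarrow> (\<lambda>\<omega>. a * f \<omega>) \<in> lin_comb W"
  unfolding lin_comb_def
proof (elim CollectE exE conjE, intro CollectI)
  fix I p c assume "finite (I::nat set)" "f = (\<lambda>\<omega>. \<Sum>i\<in>I. c i * W (p i) \<omega>)"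
  then show "\<exists>I p c. finite (I::nat set) \<and> (\<lambda>\<omega>. a * f \<omega>) = (\<lambda>\<omega>. \<Sum>i\<in>I. c i * W (p i) \<omega>)"
    by (intro exI[of _ I] exI[of _ p] exI[of _ "\<lambda>i. a * c i"]) (simp add: sum_distrib_left mult.assoc)
qed

lemma lc_add:
  assumes "f \<in> lin_comb W" "g \<in> lin_comb W"
  shows "(\<lambda>\<omega>. f \<omega> + g \<omega>) \<in> lin_comb W"
proof -
  obtain I p c where I: "finite (I::nat set)" "f = (\<lambda>\<omega>. \<Sum>i\<in>I. c i * W (p i) \<omega>)"
    using assms(1) unfolding lin_comb_def by blast
  obtain J q d where J: "finite (J::nat set)" "g = (\<lambda>\<omega>. \<Sum>i\<in>J. d i * W (q i) \<omega>)"
    using assms(2) unfolding lin_comb_def by blast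
  define e :: "nat \<Rightarrow> nat" where "e i = 2 * i" for i
  define od :: "nat \<Rightarrow> nat" where "od i = 2 * i + 1" for i
  define p' where "p' n = (if even n then p (n div 2) else q (n div 2))" for n
  define c' where "c' n = (if even n then c (n div 2) else d (n div 2))" for n
  have ie: "inj e" "inj od" unfolding e_def od_def inj_def by auto
  have ne: "2*i \<noteq> 2*j + (1::nat)" for i j by presburger
  have disj: "e ` I \<inter> od ` J = {}" unfolding e_def od_def using ne by blast
  have ie1: "inj_on e I" and ie2: "inj_on od J" using ie by (auto intro: inj_on_subset)
  have eq: "(\<Sum>i\<in>e ` I \<union> od ` J. c' i * W (p' i) \<omega>) = f \<omega> + g \<omega>" for \<omega>
  proof -
    have "(\<Sum>i\<in>e ` I \<union> od ` J. c' i * W (p' i) \<omega>) = (\<Sum>i\<in>e ` I. c' i * W (p' i) \<omega>) + (\<Sum>i\<in>od ` J. c' i * W (p' i) \<omega>)"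
      using I(1) J(1) disj by (intro sum.union_disjoint) auto
    moreover have "(\<Sum>i\<in>e ` I. c' i * W (p' i) \<omega>) = (\<Sum>i\<in>I. c' (e i) * W (p' (e i)) \<omega>)"
      by (rule sum.reindex[OF ie1, unfolded comp_def])
    moreover have "(\<Sum>i\<in>od ` J. c' i * W (p' i) \<omega>) = (\<Sum>i\<in>J. c' (od i) * W (p' (od i)) \<omega>)"
      by (rule sum.reindex[OF ie2, unfolded comp_def])
    ultimately show ?thesis using I J by (simp add: c'_def p'_def e_def od_def)
  qed
  show ?thesis unfolding lin_comb_def using I(1) J(1) eq
    by (intro CollectI exI[of _ "e ` I \<union> od ` J"] exI[of _ p'] exI[of _ c']) (auto simp: fun_eq_iff)
qed

lemma lc_diff: "f \<in> lin_comb W \<Longrightarrow> g \<in> lin_comb W \<Longrightarrow> (\<lambda>\<omega>. f \<omega> - g \<omega>) \<in> lin_comb W"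
  using lc_add[of f W "\<lambda>\<omega>. (-1) * g \<omega>"] lc_scale[of g W "-1"] by simp

lemma lc_sum: "finite S \<Longrightarrow> (\<And>i. i \<in> S \<Longrightarrow> f i \<in> lin_comb W) \<Longrightarrow> (\<lambda>\<omega>. \<Sum>i\<in>S. f i \<omega>) \<in> lin_comb W"
proof (induction S rule: finite_induct)
  case empty then show ?case using lc_zero by simp
next
  case (insert x F)
  then show ?case using lc_add[of "f x" W "\<lambda>\<omega>. \<Sum>i\<in>F. f i \<omega>"] by simp
qed

lemma sq_bound: "\<bar>a * b\<bar> \<le> \<bar>a^2 + b^2\<bar>" for a b :: real
proof -
  have "(\<bar>a\<bar> - \<bar>b\<bar>)^2 = a^2 - 2*(\<bar>a\<bar>*\<bar>b\<bar>) + b^2"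
    by (simp add: power2_diff)
  moreover have "0 \<le> (\<bar>a\<bar> - \<bar>b\<bar>)^2" by simp
  moreover have "0 \<le> \<bar>a\<bar>*\<bar>b\<bar>" by simp
  ultimately have "\<bar>a\<bar>*\<bar>b\<bar> \<le> a^2 + b^2" by linarith
  then show ?thesis by (simp add: abs_mult)
qed

lemma sq_bound2: "lam > 0 \<Longrightarrow> \<bar>a * b\<bar> \<le> (lam * a^2 + b^2 / lam) / 2" for a b lam :: real
proof -
  assume l: "lam > 0"
  have "(lam * \<bar>a\<bar> - \<bar>b\<bar>)^2 = lam^2 * a^2 - 2*lam*(\<bar>a\<bar>*\<bar>b\<bar>) + b^2"
    by (simp add: power2_diff power_mult_distrib algebra_simps)
  moreover have "0 \<le> (lam * \<bar>a\<bar> - \<bar>b\<bar>)^2" by simp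
  ultimately have "2*lam*\<bar>a * b\<bar> \<le> lam^2 * a^2 + b^2" by (simp add: abs_mult)
  then have "\<bar>a * b\<bar> \<le> (lam^2 * a^2 + b^2) / (2 * lam)"
    using l by (simp add: field_simps)
  also have "\<dots> = (lam * a^2 + b^2 / lam) / 2" using l by (simp add: field_simps power2_eq_square)
  finally show ?thesis .
qed

context
  fixes M :: "'w measure" and W :: "'t \<Rightarrow> 'w \<Rightarrow> real"
  assumes G: "centered_gaussian_field M W"
begin

lemma G_prob: "prob_space M" using G unfolding centered_gaussian_field_def by simp

lemma G_meas: "f \<in> lin_comb W \<Longrightarrow> f \<in> borel_measurable M"
  using G unfolding centered_gaussian_field_def lin_comb_def
  by (auto intro!: borel_measurable_sum borel_measurable_times)

lemma G_gauss: "f \<in> lin_comb W \<Longrightarrow> \<exists>\<sigma>\<ge>0. distr M borel f = centered_gaussian \<sigma>"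
  using G unfolding centered_gaussian_field_def lin_comb_def by auto

lemma G_sq_int: "f \<in> lin_comb W \<Longrightarrow> integrable M (\<lambda>\<omega>. (f \<omega>)^2)"
  using G_gauss[of f] cg_moment2[OF G_prob G_meas] by blast

lemma G_char: "f \<in> lin_comb W \<Longrightarrow>
    (\<integral>\<omega>. iexp (t * f \<omega>) \<partial>M) = complex_of_real (exp (- ((\<integral>\<omega>. (f \<omega>)^2 \<partial>M) * t^2) / 2))"
proof -
  assume f: "f \<in> lin_comb W"
  then obtain \<sigma> where s: "\<sigma> \<ge> 0" "distr M borel f = centered_gaussian \<sigma>" using G_gauss by blast
  show ?thesis
    using cg_char[OF G_prob G_meas[OF f] s] cg_moment2(2)[OF G_prob G_meas[OF f] s] by simp
qed

lemma G_prod_int: "f \<in> lin_comb W \<Longrightarrow> g \<in> lin_comb W \<Longrightarrow> integrable M (\<lambda>\<omega>. f \<omega> * g \<omega>)"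
proof -
  assume f: "f \<in> lin_comb W" and g: "g \<in> lin_comb W"
  show ?thesis
  proof (rule Bochner_Integration.integrable_bound[where f="\<lambda>\<omega>. (f \<omega>)^2 + (g \<omega>)^2"])
    show "integrable M (\<lambda>\<omega>. (f \<omega>)^2 + (g \<omega>)^2)"
      using G_sq_int[OF f] G_sq_int[OF g] by simp
    show "(\<lambda>\<omega>. f \<omega> * g \<omega>) \<in> borel_measurable M" using G_meas[OF f] G_meas[OF g] by simp
    show "AE \<omega> in M. norm (f \<omega> * g \<omega>) \<le> norm ((f \<omega>)^2 + (g \<omega>)^2)"
    proof (intro AE_I2)
      fix \<omega>
      show "norm (f \<omega> * g \<omega>) \<le> norm ((f \<omega>)^2 + (g \<omega>)^2)"
        using sq_bound[of "f \<omega>" "g \<omega>"] by simp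
    qed
  qed
qed

lemma G_sq_nonneg: "0 \<le> (\<integral>\<omega>. (f \<omega> :: real)^2 \<partial>M)"
  by (rule integral_nonneg_AE) simp

text \<open>Key inequality replacing Cauchy-Schwarz.\<close>
lemma G_cross_bound:
  assumes f: "f \<in> lin_comb W" and g: "g \<in> lin_comb W" and l: "lam > 0"
  shows "\<bar>\<integral>\<omega>. f \<omega> * g \<omega> \<partial>M\<bar> \<le> (lam * (\<integral>\<omega>. (f \<omega>)^2 \<partial>M) + (\<integral>\<omega>. (g \<omega>)^2 \<partial>M) / lam) / 2"
proof -
  have pw: "\<bar>a * b\<bar> \<le> (lam * a^2 + b^2 / lam) / 2" for a b :: real using sq_bound2[OF l] .
  have "\<bar>\<integral>\<omega>. f \<omega> * g \<omega> \<partial>M\<bar> \<le> (\<integral>\<omega>. \<bar>f \<omega> * g \<omega>\<bar> \<partial>M)"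
    by (rule integral_abs_bound)
  also have "\<dots> \<le> (\<integral>\<omega>. (lam * (f \<omega>)^2 + (g \<omega>)^2 / lam) / 2 \<partial>M)"
    using G_prod_int[OF f g] G_sq_int[OF f] G_sq_int[OF g] pw
    by (intro integral_mono) auto
  also have "\<dots> = (lam * (\<integral>\<omega>. (f \<omega>)^2 \<partial>M) + (\<integral>\<omega>. (g \<omega>)^2 \<partial>M) / lam) / 2"
    using G_sq_int[OF f] G_sq_int[OF g] by simp
  finally show ?thesis .
qed

end

context
  fixes M :: "'w measure" and W :: "'t::metric_space \<Rightarrow> 'w \<Rightarrow> real"
  assumes G: "centered_gaussian_field M W"
    and cont: "AE \<omega> in M. continuous_on UNIV (\<lambda>x. W x \<omega>)"
begin

lemma W_meas[measurable]: "W x \<in> borel_measurable M"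
  using G_meas[OF G lc_W] .

lemma L2_cont: "((\<lambda>x. \<integral>\<omega>. (W x \<omega> - W x0 \<omega>)^2 \<partial>M) \<longlongrightarrow> 0) (at x0)"
proof -
  interpret prob_space M by (rule G_prob[OF G])
  let ?v = "\<lambda>x. \<integral>\<omega>. (W x \<omega> - W x0 \<omega>)^2 \<partial>M"
  have lc: "(\<lambda>\<omega>. W x \<omega> - W x0 \<omega>) \<in> lin_comb W" for x by (intro lc_diff lc_W)
  show ?thesis
    unfolding tendsto_at_iff_sequentially
  proof (intro allI impI)
    fix X :: "nat \<Rightarrow> 't" assume X: "X \<longlonglongrightarrow> x0"
    have ch: "(\<integral>\<omega>. iexp (1 * (W (X i) \<omega> - W x0 \<omega>)) \<partial>M) = complex_of_real (exp (- (?v (X i) * 1^2) / 2))" for i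
      using G_char[OF G lc[of "X i"], of 1] by simp
    have "(\<lambda>i. \<integral>\<omega>. iexp (1 * (W (X i) \<omega> - W x0 \<omega>)) \<partial>M) \<longlonglongrightarrow> (\<integral>\<omega>. iexp 0 \<partial>M)"
    proof (rule integral_dominated_convergence[where w="\<lambda>_. 1"])
      show "(\<lambda>\<omega>. iexp 0) \<in> borel_measurable M" by simp
      show "(\<lambda>\<omega>. iexp (1 * (W (X i) \<omega> - W x0 \<omega>))) \<in> borel_measurable M" for i
        by measurable
      show "integrable M (\<lambda>_. 1::real)" by simp
      show "AE \<omega> in M. norm (iexp (1 * (W (X i) \<omega> - W x0 \<omega>))) \<le> 1" for i
        by (intro AE_I2) (simp add: norm_exp_i_times)
      show "AE \<omega> in M. (\<lambda>i. iexp (1 * (W (X i) \<omega> - W x0 \<omega>))) \<longlonglongrightarrow> iexp 0"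
        using cont
      proof eventually_elim
        case (elim \<omega>)
        then have "isCont (\<lambda>x. W x \<omega>) x0" by (simp add: continuous_on_eq_continuous_at)
        then have "(\<lambda>i. W (X i) \<omega>) \<longlonglongrightarrow> W x0 \<omega>" using X by (rule isCont_tendsto_compose)
        then have "(\<lambda>i. W (X i) \<omega> - W x0 \<omega>) \<longlonglongrightarrow> 0"
          using tendsto_diff[of _ "W x0 \<omega>" _ "\<lambda>_. W x0 \<omega>" "W x0 \<omega>"] by simp
        then show ?case
          by (intro isCont_tendsto_compose[where g=iexp]) (auto simp: isCont_iexp)
      qed
    qed
    then have "(\<lambda>i. complex_of_real (exp (- ?v (X i) / 2))) \<longlonglongrightarrow> complex_of_real 1"
      using ch by (simp add: prob_space)
    then have "(\<lambda>i. exp (- ?v (X i) / 2)) \<longlonglongrightarrow> 1"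
      by (simp only: tendsto_of_real_iff)
    then have "(\<lambda>i. ln (exp (- ?v (X i) / 2))) \<longlonglongrightarrow> ln 1"
      by (intro tendsto_ln) auto
    then have "(\<lambda>i. (-2) * (- ?v (X i) / 2)) \<longlonglongrightarrow> (-2) * 0"
      by (intro tendsto_mult tendsto_const) simp
    then show "((\<lambda>x. \<integral>\<omega>. (W x \<omega> - W x0 \<omega>)^2 \<partial>M) \<circ> X) \<longlonglongrightarrow> 0"
      by (simp add: comp_def)
  qed
qed

lemma cross_to_zero:
  assumes g: "g \<in> lin_comb W" and D: "\<And>x. D x \<in> lin_comb W"
    and lim: "((\<lambda>x. \<integral>\<omega>. (D x \<omega>)^2 \<partial>M) \<longlongrightarrow> 0) F"
  shows "((\<lambda>x. \<integral>\<omega>. D x \<omega> * g \<omega> \<partial>M) \<longlongrightarrow> 0) F"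
proof (rule tendstoI)
  fix e :: real assume e: "e > 0"
  define C where "C = (\<integral>\<omega>. (g \<omega>)^2 \<partial>M)"
  have C0: "C \<ge> 0" unfolding C_def by (rule G_sq_nonneg[OF G])
  define lam where "lam = e / (C + 1)"
  have lam: "lam > 0" using e C0 unfolding lam_def by simp
  have "\<forall>\<^sub>F x in F. dist (\<integral>\<omega>. (D x \<omega>)^2 \<partial>M) 0 < lam * e"
    using lim lam e by (intro tendstoD) auto
  then show "\<forall>\<^sub>F x in F. dist (\<integral>\<omega>. D x \<omega> * g \<omega> \<partial>M) 0 < e"
  proof eventually_elim
    case (elim x)
    have b: "\<bar>\<integral>\<omega>. g \<omega> * D x \<omega> \<partial>M\<bar> \<le> (lam * C + (\<integral>\<omega>. (D x \<omega>)^2 \<partial>M) / lam) / 2"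
      using G_cross_bound[OF G g D lam] unfolding C_def .
    have "lam * C < e" using e C0 unfolding lam_def by (simp add: field_simps)
    moreover have "(\<integral>\<omega>. (D x \<omega>)^2 \<partial>M) / lam < e"
      using elim lam G_sq_nonneg[OF G] by (simp add: field_simps dist_real_def)
    ultimately show ?case using b by (simp add: dist_real_def mult.commute)
  qed
qed

lemma sq_cont: "isCont (\<lambda>x. \<integral>\<omega>. (W x \<omega>)^2 \<partial>M) x0"
proof -
  interpret prob_space M by (rule G_prob[OF G])
  let ?D = "\<lambda>x \<omega>. W x \<omega> - W x0 \<omega>"
  have lc: "?D x \<in> lin_comb W" for x by (intro lc_diff lc_W)
  have eq: "(\<integral>\<omega>. (W x \<omega>)^2 \<partial>M) = (\<integral>\<omega>. (W x0 \<omega>)^2 \<partial>M) + (\<integral>\<omega>. (?D x \<omega>)^2 \<partial>M) + 2 * (\<integral>\<omega>. ?D x \<omega> * W x0 \<omega> \<partial>M)" for x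
  proof -
    have "(W x \<omega>)^2 = (W x0 \<omega>)^2 + (?D x \<omega>)^2 + 2 * (?D x \<omega> * W x0 \<omega>)" for \<omega>
      by (simp add: power2_eq_square algebra_simps)
    then have "(\<lambda>\<omega>. (W x \<omega>)^2) = (\<lambda>\<omega>. (W x0 \<omega>)^2 + (?D x \<omega>)^2 + 2 * (?D x \<omega> * W x0 \<omega>))"
      by (rule ext)
    then show ?thesis
      using G_sq_int[OF G lc_W] G_sq_int[OF G lc[of x]] G_prod_int[OF G lc[of x] lc_W[of W x0]]
      by simp
  qed
  have "((\<lambda>x. (\<integral>\<omega>. (W x0 \<omega>)^2 \<partial>M) + (\<integral>\<omega>. (?D x \<omega>)^2 \<partial>M) + 2 * (\<integral>\<omega>. ?D x \<omega> * W x0 \<omega> \<partial>M))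
        \<longlongrightarrow> (\<integral>\<omega>. (W x0 \<omega>)^2 \<partial>M) + 0 + 2 * 0) (at x0)"
  proof -
    have t1: "((\<lambda>x. \<integral>\<omega>. (?D x \<omega>)^2 \<partial>M) \<longlongrightarrow> 0) (at x0)" by (rule L2_cont)
    have t2: "((\<lambda>x. \<integral>\<omega>. ?D x \<omega> * W x0 \<omega> \<partial>M) \<longlongrightarrow> 0) (at x0)"
      by (rule cross_to_zero[OF lc_W lc t1])
    show ?thesis by (intro tendsto_add tendsto_mult tendsto_const t1 t2)
  qed
  then have lim: "((\<lambda>x. (\<integral>\<omega>. (W x0 \<omega>)^2 \<partial>M) + (\<integral>\<omega>. (?D x \<omega>)^2 \<partial>M) + 2 * (\<integral>\<omega>. ?D x \<omega> * W x0 \<omega> \<partial>M))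
        \<longlongrightarrow> (\<integral>\<omega>. (W x0 \<omega>)^2 \<partial>M)) (at x0)" by simp
  have feq: "(\<lambda>x. \<integral>\<omega>. (W x \<omega>)^2 \<partial>M) = (\<lambda>x. (\<integral>\<omega>. (W x0 \<omega>)^2 \<partial>M) + (\<integral>\<omega>. (?D x \<omega>)^2 \<partial>M) + 2 * (\<integral>\<omega>. ?D x \<omega> * W x0 \<omega> \<partial>M))"
    by (rule ext) (rule eq)
  show ?thesis unfolding isCont_def feq using lim by simp
qed

lemma cov_cont: "g \<in> lin_comb W \<Longrightarrow> isCont (\<lambda>x. \<integral>\<omega>. W x \<omega> * g \<omega> \<partial>M) x0"
proof -
  assume g: "g \<in> lin_comb W"
  let ?D = "\<lambda>x \<omega>. W x \<omega> - W x0 \<omega>"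
  have lc: "?D x \<in> lin_comb W" for x by (intro lc_diff lc_W)
  have eq: "(\<integral>\<omega>. W x \<omega> * g \<omega> \<partial>M) = (\<integral>\<omega>. W x0 \<omega> * g \<omega> \<partial>M) + (\<integral>\<omega>. ?D x \<omega> * g \<omega> \<partial>M)" for x
  proof -
    have "(\<lambda>\<omega>. W x \<omega> * g \<omega>) = (\<lambda>\<omega>. W x0 \<omega> * g \<omega> + ?D x \<omega> * g \<omega>)"
      by (rule ext) (simp add: algebra_simps)
    then show ?thesis
      using G_prod_int[OF G lc_W g] G_prod_int[OF G lc[of x] g] by simp
  qed
  have "((\<lambda>x. (\<integral>\<omega>. W x0 \<omega> * g \<omega> \<partial>M) + (\<integral>\<omega>. ?D x \<omega> * g \<omega> \<partial>M))
        \<longlongrightarrow> (\<integral>\<omega>. W x0 \<omega> * g \<omega> \<partial>M) + 0) (at x0)"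
    by (intro tendsto_add tendsto_const cross_to_zero[OF g lc] L2_cont)
  then have lim: "((\<lambda>x. (\<integral>\<omega>. W x0 \<omega> * g \<omega> \<partial>M) + (\<integral>\<omega>. ?D x \<omega> * g \<omega> \<partial>M))
        \<longlongrightarrow> (\<integral>\<omega>. W x0 \<omega> * g \<omega> \<partial>M)) (at x0)" by simp
  have feq: "(\<lambda>x. \<integral>\<omega>. W x \<omega> * g \<omega> \<partial>M) = (\<lambda>x. (\<integral>\<omega>. W x0 \<omega> * g \<omega> \<partial>M) + (\<integral>\<omega>. ?D x \<omega> * g \<omega> \<partial>M))"
    by (rule ext) (rule eq)
  show ?thesis unfolding isCont_def feq using lim by simp
qed

lemma sq_bounded: "compact S \<Longrightarrow> \<exists>C. \<forall>x\<in>S. (\<integral>\<omega>. (W x \<omega>)^2 \<partial>M) \<le> C"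
proof -
  assume S: "compact S"
  have "compact ((\<lambda>x. \<integral>\<omega>. (W x \<omega>)^2 \<partial>M) ` S)"
    using S sq_cont by (intro compact_continuous_image continuous_at_imp_continuous_on) auto
  then obtain B where "\<forall>y\<in>(\<lambda>x. \<integral>\<omega>. (W x \<omega>)^2 \<partial>M) ` S. norm y \<le> B"
    using compact_imp_bounded bounded_iff by metis
  then show ?thesis by (intro exI[of _ B]) auto
qed

end

lemma riemann:
  fixes \<mu> :: "'a::metric_space measure" and f :: "'a \<Rightarrow> 'a \<Rightarrow> real"
  assumes fin: "finite_measure \<mu>" and sp: "space \<mu> = S" and cS: "compact S"
    and sets: "\<And>A. A \<in> sets borel \<Longrightarrow> A \<inter> S \<in> sets \<mu>"
    and int: "\<And>x. x \<in> S \<Longrightarrow> \<epsilon> \<le> (\<integral>y. f x y \<partial>\<mu>)" and e: "\<epsilon> > 0"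
    and modc: "\<And>\<delta> y0. \<delta> > 0 \<Longrightarrow> y0 \<in> S \<Longrightarrow> \<exists>r>0. \<forall>y\<in>S. dist y y0 < r \<longrightarrow> (\<forall>x\<in>S. \<bar>f x y - f x y0\<bar> \<le> \<delta>)"
  shows "\<exists>(k::nat) y w. (\<forall>j<k. y j \<in> S \<and> 0 \<le> w j) \<and> (\<forall>x\<in>S. \<epsilon>/2 \<le> (\<Sum>j<k. w j * f x (y j)))"
proof -
  interpret finite_measure \<mu> by fact
  define m where "m = measure \<mu> S"
  have m0: "m \<ge> 0" unfolding m_def by simp
  define \<delta> where "\<delta> = \<epsilon> / (2 * (m + 1))"
  have d0: "\<delta> > 0" unfolding \<delta>_def using e m0 by simp
  have "\<forall>y0\<in>S. \<exists>r>0. \<forall>y\<in>S. dist y y0 < r \<longrightarrow> (\<forall>x\<in>S. \<bar>f x y - f x y0\<bar> \<le> \<delta>)"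
    using modc[OF d0] by blast
  then obtain r where r: "\<And>y0. y0 \<in> S \<Longrightarrow> r y0 > 0"
    "\<And>y0 y x. y0 \<in> S \<Longrightarrow> y \<in> S \<Longrightarrow> dist y y0 < r y0 \<Longrightarrow> x \<in> S \<Longrightarrow> \<bar>f x y - f x y0\<bar> \<le> \<delta>"
    by metis
  have "S \<subseteq> (\<Union>c\<in>S. ball c (r c))" using r(1) by force
  then obtain T where T: "T \<subseteq> S" "finite T" "S \<subseteq> (\<Union>c\<in>T. ball c (r c))"
    using compactE_image[OF cS, of S "\<lambda>c. ball c (r c)"] by auto
  obtain h where h: "bij_betw h {0..<card T} T" using ex_bij_betw_nat_finite[OF T(2)] by blast
  define k where "k = card T"
  have hS: "j < k \<Longrightarrow> h j \<in> S" for j using h T(1) unfolding k_def bij_betw_def by auto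
  define B where "B j = ball (h j) (r (h j))" for j
  define P where "P j = S \<inter> B j - (\<Union>i<j. B i)" for j
  have Pm: "P j \<in> sets \<mu>" for j
  proof -
    have "P j = (B j - (\<Union>i<j. B i)) \<inter> S" unfolding P_def by auto
    moreover have "B j - (\<Union>i<j. B i) \<in> sets borel" unfolding B_def by (intro sets.Diff) auto
    ultimately show ?thesis using sets by simp
  qed
  have cover: "\<exists>j<k. y \<in> B j" if "y \<in> S" for y
  proof -
    obtain c where "c \<in> T" "y \<in> ball c (r c)" using T(3) \<open>y \<in> S\<close> by blast
    then obtain j where "j < k" "h j = c" using h unfolding bij_betw_def k_def by (metis atLeastLessThan_iff imageE)
    then show ?thesis using \<open>y \<in> ball c (r c)\<close> unfolding B_def by auto
  qed
  have one: "(\<Sum>j<k. indicator (P j) y) = (1::real)" if "y \<in> S" for y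
  proof -
    define j0 where "j0 = (LEAST j. j < k \<and> y \<in> B j)"
    have j0: "j0 < k" "y \<in> B j0" using LeastI_ex[OF cover[OF that]] unfolding j0_def by auto
    have lt: "\<not> (y \<in> B j)" if "j < j0" for j
      using not_less_Least[OF that[unfolded j0_def]] j0 that by auto
    have "indicator (P j) y = (if j = j0 then 1 else (0::real))" if "j < k" for j
    proof (cases "j = j0")
      case True then show ?thesis using j0 lt \<open>y \<in> S\<close> unfolding P_def by auto
    next
      case False
      show ?thesis
      proof (cases "j < j0")
        case True then show ?thesis using lt[OF True] False unfolding P_def by auto
      next
        case False2: False
        then have "j0 < j" using False by simp
        then show ?thesis using j0 False unfolding P_def by (auto simp: indicator_def)
      qed
    qed
    then have "(\<Sum>j<k. indicator (P j) y) = (\<Sum>j<k. if j = j0 then 1 else (0::real))"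
      by (intro sum.cong) auto
    also have "\<dots> = 1" using j0 by simp
    finally show ?thesis .
  qed
  have close: "f x y \<le> f x (h j) + \<delta>" if "j < k" "y \<in> P j" "x \<in> S" for j x y
  proof -
    have "y \<in> S" "dist y (h j) < r (h j)" using that unfolding P_def B_def by (auto simp: dist_commute)
    then show ?thesis using r(2)[OF hS[OF that(1)] _ _ that(3)] by fastforce
  qed
  have sumP: "(\<Sum>j<k. measure \<mu> (P j)) = m"
  proof -
    have "(\<Sum>j<k. measure \<mu> (P j)) = (\<Sum>j<k. \<integral>y. indicator (P j) y \<partial>\<mu>)"
      using Pm by (simp add: Int_absorb2 sets.sets_into_space)
    also have "\<dots> = (\<integral>y. (\<Sum>j<k. indicator (P j) y) \<partial>\<mu>)"
      by (rule Bochner_Integration.integral_sum[where I="{..<k}" and f="\<lambda>j. indicator (P j)", symmetric]) (use Pm in \<open>auto simp: less_top[symmetric]\<close>)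
    also have "\<dots> = (\<integral>y. 1 \<partial>\<mu>)"
      using one sp by (intro Bochner_Integration.integral_cong) auto
    also have "\<dots> = m" unfolding m_def using sp by simp
    finally show ?thesis .
  qed
  have main: "\<epsilon>/2 \<le> (\<Sum>j<k. measure \<mu> (P j) * f x (h j))" if x: "x \<in> S" for x
  proof -
    have ix: "integrable \<mu> (f x)"
    proof (rule ccontr)
      assume "\<not> integrable \<mu> (f x)"
      then have "(\<integral>y. f x y \<partial>\<mu>) = 0" by (rule not_integrable_integral_eq)
      then show False using int[OF x] e by simp
    qed
    have "\<epsilon> \<le> (\<integral>y. f x y \<partial>\<mu>)" using int[OF x] .
    also have "\<dots> = (\<integral>y. (\<Sum>j<k. indicator (P j) y * f x y) \<partial>\<mu>)"
      using one sp by (intro Bochner_Integration.integral_cong) (auto simp: sum_distrib_right[symmetric])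
    also have "\<dots> = (\<Sum>j<k. \<integral>y. indicator (P j) y * f x y \<partial>\<mu>)"
      by (rule Bochner_Integration.integral_sum[where I="{..<k}" and f="\<lambda>j y. indicator (P j) y * f x y"])
         (use integrable_mult_indicator[OF Pm ix] in simp)
    also have "\<dots> \<le> (\<Sum>j<k. \<integral>y. indicator (P j) y * (f x (h j) + \<delta>) \<partial>\<mu>)"
    proof (intro sum_mono integral_mono)
      fix j assume "j \<in> {..<k}"
      show "integrable \<mu> (\<lambda>y. indicator (P j) y * f x y)"
        using integrable_mult_indicator[OF Pm ix] by simp
      show "integrable \<mu> (\<lambda>y. indicator (P j) y * (f x (h j) + \<delta>))"
      proof -
        have "integrable \<mu> (\<lambda>_. f x (h j) + \<delta>)" by simp
        from integrable_mult_indicator[OF Pm this] show ?thesis by simp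
      qed
      show "indicator (P j) y * f x y \<le> indicator (P j) y * (f x (h j) + \<delta>)" for y
        using close[of j y x] \<open>j \<in> {..<k}\<close> x by (auto simp: indicator_def)
    qed
    also have "\<dots> = (\<Sum>j<k. measure \<mu> (P j) * (f x (h j) + \<delta>))"
    proof (intro sum.cong refl)
      fix j
      have "(\<integral>y. indicator (P j) y * (f x (h j) + \<delta>) \<partial>\<mu>) = (\<integral>y. indicator (P j) y \<partial>\<mu>) * (f x (h j) + \<delta>)"
        by (rule integral_mult_left_zero)
      also have "\<dots> = measure \<mu> (P j) * (f x (h j) + \<delta>)"
        using Pm[of j] by (simp add: Int_absorb2 sets.sets_into_space)
      finally show "(\<integral>y. indicator (P j) y * (f x (h j) + \<delta>) \<partial>\<mu>) = measure \<mu> (P j) * (f x (h j) + \<delta>)" .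
    qed
    also have "\<dots> = (\<Sum>j<k. measure \<mu> (P j) * f x (h j)) + \<delta> * (\<Sum>j<k. measure \<mu> (P j))"
      by (simp add: sum.distrib sum_distrib_left algebra_simps)
    also have "\<delta> * (\<Sum>j<k. measure \<mu> (P j)) \<le> \<epsilon>/2"
      unfolding sumP \<delta>_def using e m0 by (simp add: field_simps)
    finally show ?thesis by simp
  qed
  show ?thesis
    apply (rule exI[where x=k], rule exI[where x=h], rule exI[where x="\<lambda>j. measure \<mu> (P j)"])
    using hS main by auto
qed

lemma ssm_space: "space (sphere_surface_measure :: (real^'n) measure) = sphere 0 1"
  unfolding sphere_surface_measure_def by (simp add: space_scale_measure space_restrict_space)

lemma ssm_sets: "A \<in> sets borel \<Longrightarrow> A \<inter> sphere 0 1 \<in> sets (sphere_surface_measure :: (real^'n) measure)"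
  unfolding sphere_surface_measure_def by (auto simp: sets_restrict_space)

lemma ssm_meas: "(\<lambda>x::real^'n. x /\<^sub>R norm x) \<in> measurable (restrict_space lborel (cball 0 1 - {0})) (restrict_space borel (sphere 0 1))"
proof (rule measurable_restrict_space2)
  show "(\<lambda>x::real^'n. x /\<^sub>R norm x) \<in> space (restrict_space lborel (cball 0 1 - {0})) \<rightarrow> sphere 0 1"
    by (auto simp: space_restrict_space)
  have "(\<lambda>x::real^'n. x /\<^sub>R norm x) \<in> measurable lborel borel" by measurable
  then show "(\<lambda>x::real^'n. x /\<^sub>R norm x) \<in> measurable (restrict_space lborel (cball 0 1 - {0})) borel"
    by (rule measurable_restrict_space1)
qed

lemma ssm_finite: "finite_measure (sphere_surface_measure :: (real^'n) measure)"
proof (rule finite_measureI)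
  let ?R = "restrict_space lborel (cball (0::real^'n) 1 - {0})"
  have eq: "emeasure (sphere_surface_measure :: (real^'n) measure) (space sphere_surface_measure)
      = of_nat CARD('n) * emeasure (distr ?R (restrict_space borel (sphere 0 1)) (\<lambda>x. x /\<^sub>R norm x)) (sphere 0 1)"
    unfolding ssm_space unfolding sphere_surface_measure_def by simp
  have "emeasure (distr ?R (restrict_space borel (sphere 0 1)) (\<lambda>x. x /\<^sub>R norm x)) (sphere 0 1)
      = emeasure ?R ((\<lambda>x. x /\<^sub>R norm x) -` sphere 0 1 \<inter> space ?R)"
    by (rule emeasure_distr[OF ssm_meas]) (auto simp: sets_restrict_space)
  also have "\<dots> \<le> emeasure ?R (space ?R)"
    by (rule emeasure_space)
  also have "\<dots> = emeasure lborel (cball (0::real^'n) 1 - {0})"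
    by (subst emeasure_restrict_space) (auto simp: space_restrict_space)
  also have "\<dots> < \<infinity>"
    by (intro emeasure_bounded_finite) (auto intro: bounded_subset[OF bounded_cball])
  finally have "emeasure (distr ?R (restrict_space borel (sphere 0 1)) (\<lambda>x. x /\<^sub>R norm x)) (sphere 0 1) < \<infinity>" .
  then show "emeasure (sphere_surface_measure :: (real^'n) measure) (space sphere_surface_measure) \<noteq> \<infinity>"
    unfolding eq by (simp add: ennreal_mult_less_top of_nat_less_top less_top)
qed

context
  fixes M :: "'w measure" and W :: "'t::metric_space \<Rightarrow> 'w \<Rightarrow> real"
  assumes G: "centered_gaussian_field M W"
    and cont: "AE \<omega> in M. continuous_on UNIV (\<lambda>x. W x \<omega>)"
begin

lemma K_modulus:
  assumes S: "compact S" and d: "\<delta> > 0"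
  shows "\<exists>r>0. \<forall>y. dist y y0 < r \<longrightarrow> (\<forall>x\<in>S. \<bar>(\<integral>\<omega>. W x \<omega> * W y \<omega> \<partial>M) - (\<integral>\<omega>. W x \<omega> * W y0 \<omega> \<partial>M)\<bar> \<le> \<delta>)"
proof -
  obtain C where C: "\<And>x. x \<in> S \<Longrightarrow> (\<integral>\<omega>. (W x \<omega>)^2 \<partial>M) \<le> C"
    using sq_bounded[OF G cont S] by blast
  define C1 where "C1 = \<bar>C\<bar> + 1"
  have C1: "C1 > 0" "\<And>x. x \<in> S \<Longrightarrow> (\<integral>\<omega>. (W x \<omega>)^2 \<partial>M) \<le> C1"
    unfolding C1_def using C by force+
  define lam where "lam = \<delta> / C1"
  have lam: "lam > 0" unfolding lam_def using d C1 by simp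
  define \<eta> where "\<eta> = \<delta> * lam"
  have eta: "\<eta> > 0" unfolding \<eta>_def using d lam by simp
  have "\<forall>\<^sub>F y in at y0. dist (\<integral>\<omega>. (W y \<omega> - W y0 \<omega>)^2 \<partial>M) 0 < \<eta>"
    using L2_cont[OF G cont, of y0] eta by (rule tendstoD)
  then obtain r where r: "r > 0" "\<And>y. y \<noteq> y0 \<Longrightarrow> dist y y0 < r \<Longrightarrow> dist (\<integral>\<omega>. (W y \<omega> - W y0 \<omega>)^2 \<partial>M) 0 < \<eta>"
    unfolding eventually_at by blast
  have small: "(\<integral>\<omega>. (W y \<omega> - W y0 \<omega>)^2 \<partial>M) \<le> \<eta>" if "dist y y0 < r" for y
  proof (cases "y = y0")
    case True then show ?thesis using eta by simp
  next
    case False then show ?thesis using r(2)[OF False that] by (simp add: dist_real_def)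
  qed
  have lcD: "(\<lambda>\<omega>. W y \<omega> - W y0 \<omega>) \<in> lin_comb W" for y by (intro lc_diff lc_W)
  show ?thesis
  proof (intro exI[of _ r] conjI allI impI ballI)
    show "r > 0" by fact
    fix y x assume y: "dist y y0 < r" and x: "x \<in> S"
    have eq: "(\<integral>\<omega>. W x \<omega> * W y \<omega> \<partial>M) - (\<integral>\<omega>. W x \<omega> * W y0 \<omega> \<partial>M) = (\<integral>\<omega>. W x \<omega> * (W y \<omega> - W y0 \<omega>) \<partial>M)"
      using G_prod_int[OF G lc_W lc_W, of x y] G_prod_int[OF G lc_W lc_W, of x y0]
      by (simp add: right_diff_distrib)
    have "\<bar>\<integral>\<omega>. W x \<omega> * (W y \<omega> - W y0 \<omega>) \<partial>M\<bar> \<le> (lam * (\<integral>\<omega>. (W x \<omega>)^2 \<partial>M) + (\<integral>\<omega>. (W y \<omega> - W y0 \<omega>)^2 \<partial>M) / lam) / 2"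
      by (rule G_cross_bound[OF G lc_W lcD lam])
    also have "\<dots> \<le> (lam * C1 + \<eta> / lam) / 2"
      using C1(2)[OF x] small[OF y] lam by (intro divide_right_mono add_mono mult_left_mono) auto
    also have "\<dots> = \<delta>" unfolding \<eta>_def lam_def using C1 d by (simp add: field_simps)
    finally show "\<bar>(\<integral>\<omega>. W x \<omega> * W y \<omega> \<partial>M) - (\<integral>\<omega>. W x \<omega> * W y0 \<omega> \<partial>M)\<bar> \<le> \<delta>" unfolding eq .
  qed
qed

lemma indep_prod:
  fixes R :: "nat \<Rightarrow> 'w \<Rightarrow> real"
  assumes Y: "Y \<in> lin_comb W" and R: "\<And>j. R j \<in> lin_comb W"
    and orth: "\<And>j. (\<integral>\<omega>. Y \<omega> * R j \<omega> \<partial>M) = 0"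
    and B0: "B0 \<in> sets borel" and B1: "B1 \<in> sets borel"
  shows "measure M {\<omega>\<in>space M. Y \<omega> \<in> B0 \<and> (\<forall>j<k. R j \<omega> \<in> B1)} =
         measure M {\<omega>\<in>space M. Y \<omega> \<in> B0} * measure M {\<omega>\<in>space M. \<forall>j<k. R j \<omega> \<in> B1}"
proof -
  interpret prob_space M by (rule G_prob[OF G])
  interpret PP: pair_prob_space M M ..
  have Ym[measurable]: "Y \<in> borel_measurable M" using G_meas[OF G Y] .
  have Rm[measurable]: "R j \<in> borel_measurable M" for j using G_meas[OF G R] .
  define X where "X i = (if i = 0 then Y else R (i - 1))" for i
  define X' where "X' i = (if i = 0 then (\<lambda>z. Y (fst z)) else (\<lambda>z. R (i - 1) (snd z)))" for i
  define B where "B i = (if i = 0 then B0 else B1)" for i :: nat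
  have Xm[measurable]: "X i \<in> borel_measurable M" for i unfolding X_def by auto
  have X'm[measurable]: "X' i \<in> borel_measurable (M \<Otimes>\<^sub>M M)" for i unfolding X'_def by auto
  have sumX: "(\<Sum>j<Suc k. \<theta> j * X j \<omega>) = \<theta> 0 * Y \<omega> + (\<Sum>j<k. \<theta> (Suc j) * R j \<omega>)" for \<theta> \<omega>
    unfolding sum.lessThan_Suc_shift X_def by simp
  have sumX': "(\<Sum>j<Suc k. \<theta> j * X' j z) = \<theta> 0 * Y (fst z) + (\<Sum>j<k. \<theta> (Suc j) * R j (snd z))" for \<theta> z
    unfolding sum.lessThan_Suc_shift X'_def by simp
  have ch: "(\<integral>\<omega>. iexp (\<Sum>j<Suc k. \<theta> j * X j \<omega>) \<partial>M) = (\<integral>z. iexp (\<Sum>j<Suc k. \<theta> j * X' j z) \<partial>(M \<Otimes>\<^sub>M M))" for \<theta>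
  proof -
    define L where "L \<omega> = (\<Sum>j<k. \<theta> (Suc j) * R j \<omega>)" for \<omega>
    have L: "L \<in> lin_comb W" unfolding L_def by (intro lc_sum lc_scale R) auto
    have Lm[measurable]: "L \<in> borel_measurable M" using G_meas[OF G L] .
    have Z: "(\<lambda>\<omega>. \<theta> 0 * Y \<omega> + L \<omega>) \<in> lin_comb W" by (intro lc_add lc_scale Y L)
    have YL: "(\<integral>\<omega>. Y \<omega> * L \<omega> \<partial>M) = 0"
    proof -
      have "(\<integral>\<omega>. Y \<omega> * L \<omega> \<partial>M) = (\<integral>\<omega>. (\<Sum>j<k. \<theta> (Suc j) * (Y \<omega> * R j \<omega>)) \<partial>M)"
        unfolding L_def by (simp add: sum_distrib_left algebra_simps)
      also have "\<dots> = (\<Sum>j<k. \<theta> (Suc j) * (\<integral>\<omega>. Y \<omega> * R j \<omega> \<partial>M))"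
        using G_prod_int[OF G Y R] by (subst Bochner_Integration.integral_sum) auto
      also have "\<dots> = 0" using orth by simp
      finally show ?thesis .
    qed
    have sq: "(\<integral>\<omega>. (\<theta> 0 * Y \<omega> + L \<omega>)^2 \<partial>M) = (\<integral>\<omega>. (Y \<omega>)^2 \<partial>M) * (\<theta> 0)^2 + (\<integral>\<omega>. (L \<omega>)^2 \<partial>M) * 1^2"
    proof -
      have "(\<lambda>\<omega>. (\<theta> 0 * Y \<omega> + L \<omega>)^2) = (\<lambda>\<omega>. (\<theta> 0)^2 * (Y \<omega>)^2 + (L \<omega>)^2 + 2 * \<theta> 0 * (Y \<omega> * L \<omega>))"
        by (rule ext) (simp add: power2_eq_square algebra_simps)
      then show ?thesis
        using G_sq_int[OF G Y] G_sq_int[OF G L] G_prod_int[OF G Y L] YL by (simp add: mult.commute)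
    qed
    have "(\<integral>\<omega>. iexp (\<Sum>j<Suc k. \<theta> j * X j \<omega>) \<partial>M) = (\<integral>\<omega>. iexp (1 * (\<theta> 0 * Y \<omega> + L \<omega>)) \<partial>M)"
      unfolding sumX L_def by simp
    also have "\<dots> = complex_of_real (exp (- ((\<integral>\<omega>. (Y \<omega>)^2 \<partial>M) * (\<theta> 0)^2 + (\<integral>\<omega>. (L \<omega>)^2 \<partial>M) * 1^2) / 2))"
      using G_char[OF G Z, of 1] sq by simp
    also have "\<dots> = complex_of_real (exp (- ((\<integral>\<omega>. (Y \<omega>)^2 \<partial>M) * (\<theta> 0)^2) / 2)) * complex_of_real (exp (- ((\<integral>\<omega>. (L \<omega>)^2 \<partial>M) * 1^2) / 2))"
      by (simp only: of_real_mult[symmetric] exp_add[symmetric]) (simp add: field_simps)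
    also have "\<dots> = (\<integral>\<omega>. iexp (\<theta> 0 * Y \<omega>) \<partial>M) * (\<integral>\<omega>. iexp (1 * L \<omega>) \<partial>M)"
      unfolding G_char[OF G Y] G_char[OF G L] ..
    also have "\<dots> = (\<integral>x. (\<integral>y. iexp (\<theta> 0 * Y x) * iexp (L y) \<partial>M) \<partial>M)"
      by simp
    also have "\<dots> = (\<integral>z. iexp (\<theta> 0 * Y (fst z)) * iexp (L (snd z)) \<partial>(M \<Otimes>\<^sub>M M))"
    proof -
      have "integrable (M \<Otimes>\<^sub>M M) (\<lambda>z. iexp (\<theta> 0 * Y (fst z)) * iexp (L (snd z)))"
        by (intro bounded_integrable[OF PP.prob_space_axioms, where K=1]) (auto simp: norm_mult)
      from PP.integral_fst'[OF this] show ?thesis by simp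
    qed
    also have "\<dots> = (\<integral>z. iexp (\<Sum>j<Suc k. \<theta> j * X' j z) \<partial>(M \<Otimes>\<^sub>M M))"
      unfolding sumX' iexp_add' L_def ..
    finally show ?thesis .
  qed
  have "measure M {\<omega>\<in>space M. \<forall>j<Suc k. X j \<omega> \<in> B j} = measure (M \<Otimes>\<^sub>M M) {z\<in>space (M \<Otimes>\<^sub>M M). \<forall>j<Suc k. X' j z \<in> B j}"
    by (rule joint_unique[OF prob_space_axioms PP.prob_space_axioms Xm X'm ch])
       (auto simp: B_def B0 B1)
  moreover have "{\<omega>\<in>space M. \<forall>j<Suc k. X j \<omega> \<in> B j} = {\<omega>\<in>space M. Y \<omega> \<in> B0 \<and> (\<forall>j<k. R j \<omega> \<in> B1)}"
    by (auto simp: All_less_Suc2 X_def B_def)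
  moreover have "{z\<in>space (M \<Otimes>\<^sub>M M). \<forall>j<Suc k. X' j z \<in> B j} = {\<omega>\<in>space M. Y \<omega> \<in> B0} \<times> {\<omega>\<in>space M. \<forall>j<k. R j \<omega> \<in> B1}"
    by (auto simp: All_less_Suc2 X'_def B_def space_pair_measure)
  moreover have "measure (M \<Otimes>\<^sub>M M) ({\<omega>\<in>space M. Y \<omega> \<in> B0} \<times> {\<omega>\<in>space M. \<forall>j<k. R j \<omega> \<in> B1}) =
      measure M {\<omega>\<in>space M. Y \<omega> \<in> B0} * measure M {\<omega>\<in>space M. \<forall>j<k. R j \<omega> \<in> B1}"
  proof -
    have s1: "{\<omega>\<in>space M. Y \<omega> \<in> B0} \<in> sets M" using B0 by measurable
    have s2: "{\<omega>\<in>space M. \<forall>j<k. R j \<omega> \<in> B1} \<in> sets M" using B1 by measurable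
    show ?thesis by (simp add: measure_def emeasure_pair_measure_Times[OF s1 s2] enn2real_mult)
  qed
  ultimately show ?thesis by simp
qed

end

theorem corollary3p2:
  fixes M :: "'w measure" and W :: "real^'n \<Rightarrow> 'w \<Rightarrow> real"
    and \<epsilon> a :: real
  assumes dim: "CARD('n) \<ge> 2"
    and gauss: "centered_gaussian_field M W"
    and cont: "AE \<omega> in M. continuous_on UNIV (\<lambda>x. W x \<omega>)"
    and zero: "AE \<omega> in M. W 0 \<omega> = 0"
    and eps: "\<epsilon> > 0"
    and cov: "\<forall>x\<in>sphere 0 1.
       (\<integral>y. (\<integral>\<omega>. W x \<omega> * W y \<omega> \<partial>M) \<partial>sphere_surface_measure) \<ge> \<epsilon>"
  shows "\<exists>A\<in>sets M. A \<subseteq> {\<omega>\<in>space M. \<forall>x\<in>sphere 0 1. a \<le> W x \<omega>}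
              \<and> measure M A > 0"
proof -
  note G = gauss
  interpret prob_space M by (rule G_prob[OF G])
  define S where "S = sphere (0::real^'n) 1"
  have cS: "compact S" unfolding S_def by simp
  have Sne: "S \<noteq> {}" unfolding S_def by simp
  have Wm[measurable]: "W x \<in> borel_measurable M" for x using G_meas[OF G lc_W] .
  define K where "K x y = (\<integral>\<omega>. W x \<omega> * W y \<omega> \<partial>M)" for x y
  have "\<exists>(k::nat) y w. (\<forall>j<k. y j \<in> S \<and> 0 \<le> w j) \<and> (\<forall>x\<in>S. \<epsilon>/2 \<le> (\<Sum>j<k. w j * K x (y j)))"
  proof (rule riemann[OF ssm_finite[where 'n='n] ssm_space[where 'n='n, folded S_def] cS])
    show "A \<inter> S \<in> sets sphere_surface_measure" if "A \<in> sets borel" for A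
      using ssm_sets[OF that] unfolding S_def .
    show "\<epsilon> \<le> (\<integral>y. K x y \<partial>sphere_surface_measure)" if "x \<in> S" for x
      using cov that unfolding S_def K_def by auto
    show "\<epsilon> > 0" by fact
    fix \<delta> :: real and y0 assume "\<delta> > 0" "y0 \<in> S"
    then show "\<exists>r>0. \<forall>y\<in>S. dist y y0 < r \<longrightarrow> (\<forall>x\<in>S. \<bar>K x y - K x y0\<bar> \<le> \<delta>)"
      using K_modulus[OF G cont cS \<open>\<delta> > 0\<close>, of y0] unfolding K_def by blast
  qed
  then obtain k :: nat and yv w where kyw: "\<And>j. j < k \<Longrightarrow> yv j \<in> S" "\<And>j. j < k \<Longrightarrow> 0 \<le> w j"
    "\<And>x. x \<in> S \<Longrightarrow> \<epsilon>/2 \<le> (\<Sum>j<k. w j * K x (yv j))"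
    by blast
  define Y where "Y = (\<lambda>\<omega>. \<Sum>j<k. w j * W (yv j) \<omega>)"
  have Y: "Y \<in> lin_comb W" unfolding Y_def by (intro lc_sum lc_scale lc_W) auto
  have Ym[measurable]: "Y \<in> borel_measurable M" using G_meas[OF G Y] .
  define c where "c x = (\<integral>\<omega>. W x \<omega> * Y \<omega> \<partial>M)" for x
  have c_eq: "c x = (\<Sum>j<k. w j * K x (yv j))" for x
  proof -
    have "c x = (\<integral>\<omega>. (\<Sum>j<k. w j * (W x \<omega> * W (yv j) \<omega>)) \<partial>M)"
      unfolding c_def Y_def by (simp add: sum_distrib_left algebra_simps)
    also have "\<dots> = (\<Sum>j<k. w j * K x (yv j))"
      unfolding K_def using G_prod_int[OF G lc_W lc_W]
      by (subst Bochner_Integration.integral_sum) auto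
    finally show ?thesis .
  qed
  have c_pos: "x \<in> S \<Longrightarrow> \<epsilon>/2 \<le> c x" for x using kyw(3) c_eq by simp
  define v where "v = (\<integral>\<omega>. (Y \<omega>)^2 \<partial>M)"
  have v_pos: "v > 0"
  proof (rule ccontr)
    assume "\<not> v > 0"
    moreover have "v \<ge> 0" unfolding v_def by (rule G_sq_nonneg[OF G])
    ultimately have "v = 0" by simp
    then have "AE \<omega> in M. (Y \<omega>)^2 = 0"
      unfolding v_def using G_sq_int[OF G Y] by (subst (asm) integral_nonneg_eq_0_iff_AE) auto
    then have "AE \<omega> in M. W x \<omega> * Y \<omega> = 0" for x by eventually_elim simp
    then have "c x = 0" for x unfolding c_def by (subst integral_cong_AE[where g="\<lambda>_. 0"]) auto
    moreover obtain x0 where "x0 \<in> S" using Sne by blast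
    ultimately show False using c_pos[of x0] eps by simp
  qed
  define R where "R x = (\<lambda>\<omega>. W x \<omega> - (c x / v) * Y \<omega>)" for x
  have R: "R x \<in> lin_comb W" for x unfolding R_def by (intro lc_diff lc_scale lc_W Y)
  have Rm[measurable]: "R x \<in> borel_measurable M" for x using G_meas[OF G R] .
  have orth: "(\<integral>\<omega>. Y \<omega> * R x \<omega> \<partial>M) = 0" for x
  proof -
    have "(\<integral>\<omega>. Y \<omega> * R x \<omega> \<partial>M) = (\<integral>\<omega>. W x \<omega> * Y \<omega> - (c x / v) * (Y \<omega>)^2 \<partial>M)"
      unfolding R_def by (simp add: algebra_simps power2_eq_square)
    also have "\<dots> = c x - (c x / v) * v"
      unfolding c_def v_def using G_prod_int[OF G lc_W Y] G_sq_int[OF G Y] by simp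
    also have "\<dots> = 0" using v_pos by simp
    finally show ?thesis .
  qed
  have c_cont: "continuous_on UNIV c"
    unfolding c_def using cov_cont[OF G cont Y] by (intro continuous_at_imp_continuous_on) auto
  have R_cont: "continuous_on S (\<lambda>x. R x \<omega>)" if "continuous_on UNIV (\<lambda>x. W x \<omega>)" for \<omega>
  proof -
    have "continuous_on UNIV (\<lambda>x. W x \<omega> - (c x / v) * Y \<omega>)"
      using v_pos by (intro continuous_intros that c_cont) auto
    then show ?thesis unfolding R_def by (rule continuous_on_subset) auto
  qed
  obtain T where T: "countable T" "T \<subseteq> S" "S \<subseteq> closure T" using separable by metis
  have Tne: "T \<noteq> {}" using T Sne by auto
  define d where "d = from_nat_into T"
  have rd: "range d = T" unfolding d_def using T(1) Tne by simp
  have dS: "d j \<in> S" for j using rd T(2) by auto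
  have clos: "closure (range d) = S"
    using T rd closure_minimal[of "range d" S] cS compact_imp_closed by auto
  define F where "F Mb = {\<omega>\<in>space M. \<forall>j. \<bar>R (d j) \<omega>\<bar> \<le> real Mb}" for Mb :: nat
  have Fm[measurable]: "F Mb \<in> sets M" for Mb unfolding F_def by measurable
  have ae_bdd: "AE \<omega> in M. \<exists>Mb. \<omega> \<in> F Mb"
    using cont AE_space
  proof eventually_elim
    case (elim \<omega>)
    have "compact ((\<lambda>x. R x \<omega>) ` S)" by (intro compact_continuous_image R_cont elim cS)
    then obtain B where B: "\<forall>y\<in>(\<lambda>x. R x \<omega>) ` S. norm y \<le> B"
      using compact_imp_bounded bounded_iff by metis
    have "\<bar>R (d j) \<omega>\<bar> \<le> real (nat \<lceil>B\<rceil>)" for j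
      using B dS[of j] by (auto intro: order_trans[OF _ real_nat_ceiling_ge])
    then show ?case unfolding F_def using elim by auto
  qed
  obtain Mb where Mb: "measure M (F Mb) > 0"
  proof (rule ccontr)
    assume "\<not> thesis"
    then have "\<forall>Mb. \<not> measure M (F Mb) > 0" using that by blast
    then have "F Mb \<in> null_sets M" for Mb
    proof -
      have "measure M (F Mb) = 0" using \<open>\<forall>Mb. \<not> measure M (F Mb) > 0\<close> measure_nonneg[of M "F Mb"]
        by (metis less_eq_real_def)
      then show ?thesis by (auto simp: null_sets_def emeasure_eq_measure Fm)
    qed
    then have "AE \<omega> in M. \<forall>Mb. \<omega> \<notin> F Mb"
      by (intro AE_all_countable[THEN iffD2] allI AE_not_in)
    with ae_bdd have "AE \<omega> in M. False" by eventually_elim auto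
    then show False using AE_False by simp
  qed
  define t where "t = v * (real Mb + \<bar>a\<bar>) * 2 / \<epsilon>"
  have t0: "t \<ge> 0" unfolding t_def using v_pos eps by simp
  have pY: "measure M {\<omega>\<in>space M. t \<le> Y \<omega>} > 0"
  proof -
    obtain \<sigma> where s: "\<sigma> \<ge> 0" "distr M borel Y = centered_gaussian \<sigma>" using G_gauss[OF G Y] by blast
    have "\<sigma>^2 = v" unfolding v_def using cg_moment2(2)[OF prob_space_axioms Ym s] by simp
    then have "\<sigma> > 0" using s(1) v_pos by (cases "\<sigma> = 0") auto
    then show ?thesis by (rule cg_pos[OF prob_space_axioms Ym _ s(2)])
  qed
  define E where "E n = {\<omega>\<in>space M. t \<le> Y \<omega> \<and> (\<forall>j<n. \<bar>R (d j) \<omega>\<bar> \<le> real Mb)}" for n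
  define Fk where "Fk n = {\<omega>\<in>space M. \<forall>j<n. \<bar>R (d j) \<omega>\<bar> \<le> real Mb}" for n
  have Em[measurable]: "E n \<in> sets M" for n unfolding E_def by measurable
  have Fkm[measurable]: "Fk n \<in> sets M" for n unfolding Fk_def by measurable
  have Ek: "measure M (E n) = measure M {\<omega>\<in>space M. t \<le> Y \<omega>} * measure M (Fk n)" for n
  proof -
    have "measure M {\<omega>\<in>space M. Y \<omega> \<in> {x. t \<le> x} \<and> (\<forall>j<n. R (d j) \<omega> \<in> {x. \<bar>x\<bar> \<le> real Mb})} =
          measure M {\<omega>\<in>space M. Y \<omega> \<in> {x. t \<le> x}} * measure M {\<omega>\<in>space M. \<forall>j<n. R (d j) \<omega> \<in> {x. \<bar>x\<bar> \<le> real Mb}}"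
      by (rule indep_prod[OF G cont Y R orth]) measurable
    then show ?thesis unfolding E_def Fk_def mem_Collect_eq .
  qed
  have decE: "decseq E" unfolding decseq_def E_def by auto
  have decF: "decseq Fk" unfolding decseq_def Fk_def by auto
  define Einf where "Einf = {\<omega>\<in>space M. t \<le> Y \<omega> \<and> (\<forall>j. \<bar>R (d j) \<omega>\<bar> \<le> real Mb)}"
  have IE: "(\<Inter>n. E n) = Einf" unfolding E_def Einf_def by auto
  have IF: "(\<Inter>n. Fk n) = F Mb" unfolding Fk_def F_def by auto
  have Einfm[measurable]: "Einf \<in> sets M" unfolding Einf_def by measurable
  have rE: "range E \<subseteq> sets M" using Em by auto
  have rF: "range Fk \<subseteq> sets M" using Fkm by auto
  have "(\<lambda>n. measure M (E n)) \<longlonglongrightarrow> measure M Einf"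
    using finite_Lim_measure_decseq[OF rE decE] unfolding IE .
  moreover have "(\<lambda>n. measure M (E n)) \<longlonglongrightarrow> measure M {\<omega>\<in>space M. t \<le> Y \<omega>} * measure M (F Mb)"
    unfolding Ek using finite_Lim_measure_decseq[OF rF decF] unfolding IF by (rule tendsto_mult_left)
  ultimately have mEinf: "measure M Einf = measure M {\<omega>\<in>space M. t \<le> Y \<omega>} * measure M (F Mb)"
    by (rule LIMSEQ_unique)
  have Einf_pos: "measure M Einf > 0" unfolding mEinf using pY Mb by simp
  obtain N where N0: "{\<omega>\<in>space M. \<not> continuous_on UNIV (\<lambda>x. W x \<omega>)} \<subseteq> N" "emeasure M N = 0" "N \<in> sets M"
    using cont by (rule AE_E)
  have N: "{\<omega>\<in>space M. \<not> continuous_on UNIV (\<lambda>x. W x \<omega>)} \<subseteq> N" "N \<in> null_sets M"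
    using N0 by auto
  define A where "A = Einf - N"
  have Am: "A \<in> sets M" unfolding A_def using N(2) by auto
  have mA: "measure M A > 0" unfolding A_def using measure_Diff_null_set[OF Einfm N(2)] Einf_pos by simp
  have sub: "A \<subseteq> {\<omega>\<in>space M. \<forall>x\<in>sphere 0 1. a \<le> W x \<omega>}"
  proof safe
    fix \<omega> assume \<omega>: "\<omega> \<in> A"
    then show "\<omega> \<in> space M" unfolding A_def Einf_def by auto
    have cw: "continuous_on UNIV (\<lambda>x. W x \<omega>)" using \<omega> N(1) unfolding A_def Einf_def by auto
    have tY: "t \<le> Y \<omega>" and bd: "\<forall>j. \<bar>R (d j) \<omega>\<bar> \<le> real Mb" using \<omega> unfolding A_def Einf_def by auto
    fix x :: "real^'n" assume x: "x \<in> sphere 0 1"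
    then have xS: "x \<in> S" unfolding S_def .
    have Rx: "\<bar>R x \<omega>\<bar> \<le> real Mb"
      using continuous_on_closure_norm_le[of "range d" "\<lambda>x. R x \<omega>" "real Mb" x] R_cont[OF cw] clos bd xS
      by auto
    have cv: "(\<epsilon>/2) / v \<le> c x / v" using c_pos[OF xS] v_pos by (intro divide_right_mono) auto
    have "real Mb + \<bar>a\<bar> = ((\<epsilon>/2) / v) * t" unfolding t_def using v_pos eps by (simp add: field_simps)
    also have "\<dots> \<le> (c x / v) * Y \<omega>"
    proof (rule mult_mono)
      show "0 \<le> c x / v" using cv eps v_pos by (smt (verit) divide_pos_pos)
    qed (use cv tY t0 in auto)
    finally have "real Mb + \<bar>a\<bar> \<le> (c x / v) * Y \<omega>" .
    moreover have "W x \<omega> = (c x / v) * Y \<omega> + R x \<omega>" unfolding R_def by simp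
    ultimately show "a \<le> W x \<omega>" using Rx by linarith
  qed
  show ?thesis using Am sub mA by blast
qed

end
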